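(* Consider the $K$-class system with joint distributions described in the context, with constants $M_R,L_R,L_P,L_Q>0$ and $\gamma\in[0,1)$. Let $\mathbf x_0^{\mathbf N}$ be initial states and $\boldsymbol\mu_0\in\mathcal P(\mathcal X\times[K])$ their empirical joint distribution. Define $C_R=M_R+L_R$, $C_P=2+KL_P$, $S_R=M_R(1+L_Q)+L_R(2+KL_Q)$, $S_P=(1+KL_Q)+KL_P(2+KL_Q)$. If $\gamma S_P<1$, then for every $\boldsymbol\pi\in\Pi$, $$\Big|v^{\mathbf N}(\mathbf x_0^{\mathbf N},\boldsymbol\pi)-v^{\mathrm{MF}}(\boldsymbol\mu_0,\boldsymbol\pi)\Big|\le\frac{C_R}{1-\gamma}\sqrt{|\mathcal X||\mathcal U|}\Big(\sum_{k}\frac1{\sqrt{N_k}}\Big)+C_P\Big(\frac{S_R}{S_P-1}\Big)\sqrt{|\mathcal X||\mathcal U|}\Big(\sum_k\frac1{\sqrt{N_k}}\Big)\Big[\frac1{1-\gamma S_P}-\frac1{1-\gamma}\Big].$$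
   Context: Fix $K\ge1$, $N_1,\dots,N_K\ge1$, $[K]=\{1,\dots,K\}$, $N_{\mathrm{pop}}=\sum_kN_k$, finite sets $\mathcal X,\mathcal U$, $\mathcal P(A)$ the probability distributions on $A$, $|\cdot|_1$ the $L_1$ norm. Agent $j\in[N_k]$ of class $k$ has state $x_{j,k}^t$, action $u_{j,k}^t$; $\boldsymbol\mu_t^{\mathbf N}(x,k)=\frac1{N_{\mathrm{pop}}}\sum_{j=1}^{N_k}\mathbf 1(x_{j,k}^t=x)$, $\boldsymbol\nu_t^{\mathbf N}(u,k)=\frac1{N_{\mathrm{pop}}}\sum_{j=1}^{N_k}\mathbf 1(u_{j,k}^t=u)$. For each $k$: $r_k:\mathcal X\times\mathcal U\times\mathcal P(\mathcal X\times[K])\times\mathcal P(\mathcal U\times[K])\to\mathbb R$, $P_k:\mathcal X\times\mathcal U\times\mathcal P(\mathcal X\times[K])\times\mathcal P(\mathcal U\times[K])\to\mathcal P(\mathcal X)$ with $|r_k|\le M_R$, $|r_k(x,u,\boldsymbol\mu_1,\boldsymbol\nu_1)-r_k(x,u,\boldsymbol\mu_2,\boldsymbol\nu_2)|\le L_R(|\boldsymbol\mu_1-\boldsymbol\mu_2|_1+|\boldsymbol\nu_1-\boldsymbol\nu_2|_1)$, $|P_k(x,u,\boldsymbol\mu_1,\boldsymbol\nu_1)-P_k(x,u,\boldsymbol\mu_2,\boldsymbol\nu_2)|_1\le L_P(|\boldsymbol\mu_1-\boldsymbol\mu_2|_1+|\boldsymbol\nu_1-\boldsymbol\nu_2|_1)$.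 Policies $\boldsymbol\pi=\{\boldsymbol\pi_t\}_{t\ge0}$, $\boldsymbol\pi_t=(\pi_k^t)_k$, $\pi_k^t:\mathcal X\times\mathcal P(\mathcal X\times[K])\to\mathcal P(\mathcal U)$; $\Pi$ is the set of policies with $|\pi_k^t(x,\boldsymbol\mu_1)-\pi_k^t(x,\boldsymbol\mu_2)|_1\le L_Q|\boldsymbol\mu_1-\boldsymbol\mu_2|_1$. Dynamics: conditioned on all states, actions independent with $u_{j,k}^t\sim\pi_k^t(x_{j,k}^t,\boldsymbol\mu_t^{\mathbf N})$; conditioned on states and actions, next states independent with $x_{j,k}^{t+1}\sim P_k(x_{j,k}^t,u_{j,k}^t,\boldsymbol\mu_t^{\mathbf N},\boldsymbol\nu_t^{\mathbf N})$. $v^{\mathbf N}(\mathbf x_0^{\mathbf N},\boldsymbol\pi)=\frac1{N_{\mathrm{pop}}}\sum_k\sum_j\mathbb E[\sum_{t\ge0}\gamma^tr_k(x_{j,k}^t,u_{j,k}^t,\boldsymbol\mu_t^{\mathbf N},\boldsymbol\nu_t^{\mathbf N})]$. Mean-field: $\nu^{\mathrm{MF}}(\boldsymbol\mu,\boldsymbol\pi)(u,k)=\sum_x\pi_k(x,\boldsymbol\mu)(u)\boldsymbol\mu(x,k)$, $P^{\mathrm{MF}}(\boldsymbol\mu,\boldsymbol\pi)(x',k)=\sum_{x,u}\boldsymbol\mu(x,k)\pi_k(x,\boldsymbol\mu)(u)P_k(x,u,\boldsymbol\mu,\nu^{\mathrm{MF}}(\boldsymbol\mu,\boldsymbol\pi))(x')$,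 $r_k^{\mathrm{MF}}(\boldsymbol\mu,\boldsymbol\pi)=\sum_{x,u}\boldsymbol\mu(x,k)\pi_k(x,\boldsymbol\mu)(u)r_k(x,u,\boldsymbol\mu,\nu^{\mathrm{MF}}(\boldsymbol\mu,\boldsymbol\pi))$; with $\boldsymbol\mu_{t+1}=P^{\mathrm{MF}}(\boldsymbol\mu_t,\boldsymbol\pi_t)$, $v^{\mathrm{MF}}(\boldsymbol\mu_0,\boldsymbol\pi)=\sum_k\sum_{t\ge0}\gamma^tr_k^{\mathrm{MF}}(\boldsymbol\mu_t,\boldsymbol\pi_t)$. *)

theory Defs
  imports "HOL-Probability.Probability"
begin

text \<open>Classes are indexed by k in {1..K}; agent j of class k by the pair (k,j) with j in {1..N k}.\<close>

definition is_jdist :: "nat \<Rightarrow> ('a::finite \<Rightarrow> nat \<Rightarrow> real) \<Rightarrow> bool" where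
  "is_jdist K m \<longleftrightarrow> (\<forall>a k. 0 \<le> m a k) \<and> (\<forall>a k. k \<notin> {1..K} \<longrightarrow> m a k = 0)
     \<and> (\<Sum>a\<in>UNIV. \<Sum>k\<in>{1..K}. m a k) = 1"

definition jL1 :: "nat \<Rightarrow> ('a::finite \<Rightarrow> nat \<Rightarrow> real) \<Rightarrow> ('a \<Rightarrow> nat \<Rightarrow> real) \<Rightarrow> real" where
  "jL1 K m1 m2 = (\<Sum>a\<in>UNIV. \<Sum>k\<in>{1..K}. \<bar>m1 a k - m2 a k\<bar>)"

definition pL1 :: "'a::finite pmf \<Rightarrow> 'a pmf \<Rightarrow> real" where
  "pL1 p q = (\<Sum>a\<in>UNIV. \<bar>pmf p a - pmf q a\<bar>)"

definition agents :: "nat \<Rightarrow> (nat \<Rightarrow> nat) \<Rightarrow> (nat \<times> nat) set" where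
  "agents K N = {(k, j). k \<in> {1..K} \<and> j \<in> {1..N k}}"

definition Npop :: "nat \<Rightarrow> (nat \<Rightarrow> nat) \<Rightarrow> nat" where
  "Npop K N = (\<Sum>k\<in>{1..K}. N k)"

definition emp :: "nat \<Rightarrow> (nat \<Rightarrow> nat) \<Rightarrow> (nat \<times> nat \<Rightarrow> 'a) \<Rightarrow> 'a \<Rightarrow> nat \<Rightarrow> real" where
  "emp K N c a k = (if k \<in> {1..K}
      then (\<Sum>j\<in>{1..N k}. if c (k, j) = a then 1 else 0) / real (Npop K N) else 0)"

text \<open>Policies: pl t k x mu is the action distribution of class k at time t.\<close>
definition policy_class ::
  "nat \<Rightarrow> real \<Rightarrow> (nat \<Rightarrow> nat \<Rightarrow> 'x::finite \<Rightarrow> ('x \<Rightarrow> nat \<Rightarrow> real) \<Rightarrow> 'u::finite pmf) \<Rightarrow> bool" where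
  "policy_class K LQ pl \<longleftrightarrow> (\<forall>t. \<forall>k\<in>{1..K}. \<forall>x m1 m2. is_jdist K m1 \<longrightarrow> is_jdist K m2 \<longrightarrow>
      pL1 (pl t k x m1) (pl t k x m2) \<le> LQ * jL1 K m1 m2)"

definition act_law ::
  "nat \<Rightarrow> (nat \<Rightarrow> nat) \<Rightarrow> (nat \<Rightarrow> nat \<Rightarrow> 'x::finite \<Rightarrow> ('x \<Rightarrow> nat \<Rightarrow> real) \<Rightarrow> 'u::finite pmf)
   \<Rightarrow> nat \<Rightarrow> (nat \<times> nat \<Rightarrow> 'x) \<Rightarrow> (nat \<times> nat \<Rightarrow> 'u) pmf" where
  "act_law K N pl t xs = Pi_pmf (agents K N) undefined
     (\<lambda>(k, j). pl t k (xs (k, j)) (emp K N xs))"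

definition next_law ::
  "nat \<Rightarrow> (nat \<Rightarrow> nat) \<Rightarrow> (nat \<Rightarrow> 'x::finite \<Rightarrow> 'u::finite \<Rightarrow> ('x \<Rightarrow> nat \<Rightarrow> real) \<Rightarrow> ('u \<Rightarrow> nat \<Rightarrow> real) \<Rightarrow> 'x pmf)
   \<Rightarrow> (nat \<times> nat \<Rightarrow> 'x) \<Rightarrow> (nat \<times> nat \<Rightarrow> 'u) \<Rightarrow> (nat \<times> nat \<Rightarrow> 'x) pmf" where
  "next_law K N P xs us = Pi_pmf (agents K N) undefined
     (\<lambda>(k, j). P k (xs (k, j)) (us (k, j)) (emp K N xs) (emp K N us))"

primrec state_law ::
  "nat \<Rightarrow> (nat \<Rightarrow> nat) \<Rightarrow> (nat \<Rightarrow> 'x::finite \<Rightarrow> 'u::finite \<Rightarrow> ('x \<Rightarrow> nat \<Rightarrow> real) \<Rightarrow> ('u \<Rightarrow> nat \<Rightarrow> real) \<Rightarrow> 'x pmf)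
   \<Rightarrow> (nat \<Rightarrow> nat \<Rightarrow> 'x \<Rightarrow> ('x \<Rightarrow> nat \<Rightarrow> real) \<Rightarrow> 'u pmf)
   \<Rightarrow> (nat \<times> nat \<Rightarrow> 'x) \<Rightarrow> nat \<Rightarrow> (nat \<times> nat \<Rightarrow> 'x) pmf" where
  "state_law K N P pl x0 0 = return_pmf x0"
| "state_law K N P pl x0 (Suc t) =
     state_law K N P pl x0 t \<bind> (\<lambda>xs. act_law K N pl t xs \<bind> (\<lambda>us. next_law K N P xs us))"

definition sa_law where
  "sa_law K N P pl x0 t = state_law K N P pl x0 t \<bind>
     (\<lambda>xs. map_pmf (\<lambda>us. (xs, us)) (act_law K N pl t xs))"

text \<open>Value of the N-agent system (expectation and the discounted series interchanged,
  which is legitimate since rewards are bounded).\<close>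
definition vN ::
  "nat \<Rightarrow> (nat \<Rightarrow> nat) \<Rightarrow> (nat \<Rightarrow> 'x::finite \<Rightarrow> 'u::finite \<Rightarrow> ('x \<Rightarrow> nat \<Rightarrow> real) \<Rightarrow> ('u \<Rightarrow> nat \<Rightarrow> real) \<Rightarrow> real)
   \<Rightarrow> (nat \<Rightarrow> 'x \<Rightarrow> 'u \<Rightarrow> ('x \<Rightarrow> nat \<Rightarrow> real) \<Rightarrow> ('u \<Rightarrow> nat \<Rightarrow> real) \<Rightarrow> 'x pmf)
   \<Rightarrow> (nat \<Rightarrow> nat \<Rightarrow> 'x \<Rightarrow> ('x \<Rightarrow> nat \<Rightarrow> real) \<Rightarrow> 'u pmf) \<Rightarrow> real \<Rightarrow> (nat \<times> nat \<Rightarrow> 'x) \<Rightarrow> real" where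
  "vN K N r P pl \<gamma> x0 =
     (1 / real (Npop K N)) * (\<Sum>kj\<in>agents K N. \<Sum>t. \<gamma> ^ t *
        measure_pmf.expectation (sa_law K N P pl x0 t)
          (\<lambda>(xs, us). r (fst kj) (xs kj) (us kj) (emp K N xs) (emp K N us)))"

definition nuMF :: "(nat \<Rightarrow> 'x::finite \<Rightarrow> ('x \<Rightarrow> nat \<Rightarrow> real) \<Rightarrow> 'u pmf) \<Rightarrow> ('x \<Rightarrow> nat \<Rightarrow> real) \<Rightarrow> 'u \<Rightarrow> nat \<Rightarrow> real" where
  "nuMF pit mu u k = (\<Sum>x\<in>UNIV. pmf (pit k x mu) u * mu x k)"

definition PMF ::
  "(nat \<Rightarrow> 'x::finite \<Rightarrow> 'u::finite \<Rightarrow> ('x \<Rightarrow> nat \<Rightarrow> real) \<Rightarrow> ('u \<Rightarrow> nat \<Rightarrow> real) \<Rightarrow> 'x pmf)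
   \<Rightarrow> (nat \<Rightarrow> 'x \<Rightarrow> ('x \<Rightarrow> nat \<Rightarrow> real) \<Rightarrow> 'u pmf) \<Rightarrow> ('x \<Rightarrow> nat \<Rightarrow> real) \<Rightarrow> 'x \<Rightarrow> nat \<Rightarrow> real" where
  "PMF P pit mu x' k = (\<Sum>x\<in>UNIV. \<Sum>u\<in>UNIV.
      mu x k * pmf (pit k x mu) u * pmf (P k x u mu (nuMF pit mu)) x')"

definition rMF ::
  "(nat \<Rightarrow> 'x::finite \<Rightarrow> 'u::finite \<Rightarrow> ('x \<Rightarrow> nat \<Rightarrow> real) \<Rightarrow> ('u \<Rightarrow> nat \<Rightarrow> real) \<Rightarrow> real)
   \<Rightarrow> (nat \<Rightarrow> 'x \<Rightarrow> ('x \<Rightarrow> nat \<Rightarrow> real) \<Rightarrow> 'u pmf) \<Rightarrow> ('x \<Rightarrow> nat \<Rightarrow> real) \<Rightarrow> nat \<Rightarrow> real" where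
  "rMF r pit mu k = (\<Sum>x\<in>UNIV. \<Sum>u\<in>UNIV.
      mu x k * pmf (pit k x mu) u * r k x u mu (nuMF pit mu))"

primrec mf_traj ::
  "(nat \<Rightarrow> 'x::finite \<Rightarrow> 'u::finite \<Rightarrow> ('x \<Rightarrow> nat \<Rightarrow> real) \<Rightarrow> ('u \<Rightarrow> nat \<Rightarrow> real) \<Rightarrow> 'x pmf)
   \<Rightarrow> (nat \<Rightarrow> nat \<Rightarrow> 'x \<Rightarrow> ('x \<Rightarrow> nat \<Rightarrow> real) \<Rightarrow> 'u pmf) \<Rightarrow> ('x \<Rightarrow> nat \<Rightarrow> real) \<Rightarrow> nat \<Rightarrow> 'x \<Rightarrow> nat \<Rightarrow> real" where
  "mf_traj P pl mu0 0 = mu0"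
| "mf_traj P pl mu0 (Suc t) = PMF P (pl t) (mf_traj P pl mu0 t)"

definition vMF ::
  "nat \<Rightarrow> (nat \<Rightarrow> 'x::finite \<Rightarrow> 'u::finite \<Rightarrow> ('x \<Rightarrow> nat \<Rightarrow> real) \<Rightarrow> ('u \<Rightarrow> nat \<Rightarrow> real) \<Rightarrow> real)
   \<Rightarrow> (nat \<Rightarrow> 'x \<Rightarrow> 'u \<Rightarrow> ('x \<Rightarrow> nat \<Rightarrow> real) \<Rightarrow> ('u \<Rightarrow> nat \<Rightarrow> real) \<Rightarrow> 'x pmf)
   \<Rightarrow> (nat \<Rightarrow> nat \<Rightarrow> 'x \<Rightarrow> ('x \<Rightarrow> nat \<Rightarrow> real) \<Rightarrow> 'u pmf) \<Rightarrow> real \<Rightarrow> ('x \<Rightarrow> nat \<Rightarrow> real) \<Rightarrow> real" where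
  "vMF K r P pl \<gamma> mu0 = (\<Sum>k\<in>{1..K}. \<Sum>t. \<gamma> ^ t * rMF r (pl t) (mf_traj P pl mu0 t) k)"

end

theory Submission
  imports Defs
begin

abbreviation EE :: "'a pmf \<Rightarrow> ('a \<Rightarrow> real) \<Rightarrow> real" where
  "EE M f \<equiv> measure_pmf.expectation M f"

lemma EE_fin:
  assumes "finite S" "set_pmf M \<subseteq> S"
  shows "EE M f = (\<Sum>a\<in>S. f a * pmf M a)"
  using assms by (intro integral_measure_pmf_real) auto

lemma EE_bind:
  assumes fM: "finite (set_pmf M)" and fN: "\<And>x. x \<in> set_pmf M \<Longrightarrow> finite (set_pmf (N x))"
  shows "EE (M \<bind> N) f = EE M (\<lambda>x. EE (N x) f)"
proof -
  define S where "S = (\<Union>x\<in>set_pmf M. set_pmf (N x))"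
  have fS: "finite S" using fM fN by (auto simp: S_def)
  have "EE (M \<bind> N) f = (\<Sum>y\<in>S. f y * pmf (M \<bind> N) y)"
    by (rule EE_fin[OF fS]) (auto simp: S_def)
  also have "\<dots> = (\<Sum>y\<in>S. f y * (\<Sum>x\<in>set_pmf M. pmf (N x) y * pmf M x))"
    by (intro sum.cong refl arg_cong2[where f="(*)"]) (simp add: pmf_bind EE_fin[OF fM])
  also have "\<dots> = (\<Sum>x\<in>set_pmf M. (\<Sum>y\<in>S. f y * pmf (N x) y) * pmf M x)"
    by (simp add: sum_distrib_left sum_distrib_right sum.swap[of _ S] mult.assoc mult.left_commute)
  also have "\<dots> = (\<Sum>x\<in>set_pmf M. EE (N x) f * pmf M x)"
    by (intro sum.cong refl arg_cong2[where f="(*)"] EE_fin[symmetric] fS) (auto simp: S_def)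
  also have "\<dots> = EE M (\<lambda>x. EE (N x) f)"
    by (rule EE_fin[symmetric, OF fM]) auto
  finally show ?thesis .
qed

lemma EE_int: "finite (set_pmf M) \<Longrightarrow> integrable (measure_pmf M) (f :: _ \<Rightarrow> real)"
  by (rule integrable_measure_pmf_finite)

lemma EE_abs_sq:
  assumes "finite (set_pmf M)"
  shows "EE M (\<lambda>x. \<bar>f x\<bar>) \<le> sqrt (EE M (\<lambda>x. (f x)^2))"
proof -
  define m where "m = EE M (\<lambda>x. \<bar>f x\<bar>)"
  have m0: "m \<ge> 0" unfolding m_def by (intro integral_nonneg_AE) auto
  have "0 \<le> EE M (\<lambda>x. (\<bar>f x\<bar> - m)^2)" by (intro integral_nonneg_AE) auto
  also have "EE M (\<lambda>x. (\<bar>f x\<bar> - m)^2) = EE M (\<lambda>x. (f x)^2 - 2 * m * \<bar>f x\<bar> + m^2)"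
    by (intro Bochner_Integration.integral_cong refl) (simp add: power2_eq_square algebra_simps)
  also have "\<dots> = EE M (\<lambda>x. (f x)^2) - 2 * m * m + m^2"
    using assms by (simp add: EE_int m_def)
  finally have "m^2 \<le> EE M (\<lambda>x. (f x)^2)" by (simp add: power2_eq_square)
  thus ?thesis unfolding m_def[symmetric] using m0 by (simp add: real_le_rsqrt)
qed

lemma fin_Pi: "finite A \<Longrightarrow> finite (set_pmf (Pi_pmf A d (p :: _ \<Rightarrow> 'b::finite pmf)))"
  by (rule finite_subset[OF set_Pi_pmf_subset']) (auto intro!: finite_PiE_dflt)

lemma fin_pmf: "finite (set_pmf (p :: 'b::finite pmf))" by simp

lemma EE_pair:
  fixes p :: "'a::finite pmf"
  assumes "finite (set_pmf q)"
  shows "EE (pair_pmf p q) h = EE p (\<lambda>a. EE q (\<lambda>b. h (a, b)))"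
proof -
  have "EE (pair_pmf p q) h = EE p (\<lambda>a. EE (q \<bind> (\<lambda>y. return_pmf (a, y))) h)"
    unfolding pair_pmf_def using assms by (subst EE_bind) auto
  also have "\<dots> = EE p (\<lambda>a. EE q (\<lambda>b. h (a, b)))"
    using assms by (subst EE_bind) auto
  finally show ?thesis .
qed

lemma var_Pi:
  fixes p :: "'i \<Rightarrow> 'b::finite pmf" and g :: "'i \<Rightarrow> 'b \<Rightarrow> real"
  assumes "finite A" "\<And>i. i \<in> A \<Longrightarrow> EE (p i) (g i) = 0"
  shows "EE (Pi_pmf A d p) (\<lambda>f. (\<Sum>i\<in>A. g i (f i))^2) = (\<Sum>i\<in>A. EE (p i) (\<lambda>y. (g i y)^2))"
  using assms
proof (induction A rule: finite_induct)
  case empty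
  then show ?case by simp
next
  case (insert x A)
  define S where "S = (\<lambda>f. \<Sum>i\<in>A. g i (f i))"
  have fin: "finite (set_pmf (Pi_pmf A d p))" using insert by (simp add: fin_Pi)
  have IH: "EE (Pi_pmf A d p) (\<lambda>f. (S f)^2) = (\<Sum>i\<in>A. EE (p i) (\<lambda>y. (g i y)^2))"
    unfolding S_def using insert by auto
  have eq: "(\<Sum>i\<in>insert x A. g i ((f(x:=y)) i)) = g x y + S f" for f y
  proof -
    have "(\<Sum>i\<in>A. g i ((f(x:=y)) i)) = S f"
      unfolding S_def using insert by (intro sum.cong) auto
    thus ?thesis using insert by simp
  qed
  have "EE (Pi_pmf (insert x A) d p) (\<lambda>f. (\<Sum>i\<in>insert x A. g i (f i))^2)
      = EE (map_pmf (\<lambda>(y,f). f(x:=y)) (pair_pmf (p x) (Pi_pmf A d p))) (\<lambda>f. (\<Sum>i\<in>insert x A. g i (f i))^2)"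
    by (subst Pi_pmf_insert[OF insert(1,2)]) (rule refl)
  also have "\<dots> = EE (pair_pmf (p x) (Pi_pmf A d p)) (\<lambda>z. (\<Sum>i\<in>insert x A. g i (((\<lambda>(y,f). f(x:=y)) z) i))^2)"
    by (rule integral_map_pmf)
  also have "\<dots> = EE (pair_pmf (p x) (Pi_pmf A d p)) (\<lambda>(y, f). (g x y + S f)^2)"
    by (intro Bochner_Integration.integral_cong refl) (simp add: case_prod_unfold eq del: fun_upd_apply)
  also have "\<dots> = EE (p x) (\<lambda>y. EE (Pi_pmf A d p) (\<lambda>f. (g x y)^2 + 2 * g x y * S f + (S f)^2))"
    by (subst EE_pair[OF fin]) (simp add: power2_eq_square algebra_simps)
  also have "\<dots> = EE (p x) (\<lambda>y. (g x y)^2 + 2 * g x y * EE (Pi_pmf A d p) S + EE (Pi_pmf A d p) (\<lambda>f. (S f)^2))"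
    using fin by (simp add: EE_int)
  also have "\<dots> = EE (p x) (\<lambda>y. (g x y)^2) + 2 * EE (p x) (g x) * EE (Pi_pmf A d p) S + EE (Pi_pmf A d p) (\<lambda>f. (S f)^2)"
    by (simp add: EE_int)
  also have "\<dots> = EE (p x) (\<lambda>y. (g x y)^2) + (\<Sum>i\<in>A. EE (p i) (\<lambda>y. (g i y)^2))"
    using insert IH by simp
  finally show ?case using insert by simp
qed

lemma var_Pi_subset:
  fixes p :: "'i \<Rightarrow> 'b::finite pmf" and g :: "'i \<Rightarrow> 'b \<Rightarrow> real"
  assumes "finite A" "B \<subseteq> A" "\<And>i. i \<in> B \<Longrightarrow> EE (p i) (g i) = 0"
  shows "EE (Pi_pmf A d p) (\<lambda>f. (\<Sum>i\<in>B. g i (f i))^2) = (\<Sum>i\<in>B. EE (p i) (\<lambda>y. (g i y)^2))"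
proof -
  define g' where "g' = (\<lambda>i y. if i \<in> B then g i y else 0)"
  have fB: "finite B" using assms finite_subset by blast
  have 1: "(\<Sum>i\<in>B. g i (f i)) = (\<Sum>i\<in>A. g' i (f i))" for f
    unfolding g'_def using assms fB by (simp add: sum.If_cases Int_absorb1)
  have "(\<Sum>i\<in>A. EE (p i) (\<lambda>y. (g' i y)^2)) = (\<Sum>i\<in>A. if i \<in> B then EE (p i) (\<lambda>y. (g i y)^2) else 0)"
    by (intro sum.cong refl) (simp add: g'_def)
  also have "\<dots> = (\<Sum>i\<in>B. EE (p i) (\<lambda>y. (g i y)^2))"
    using assms fB by (simp add: sum.If_cases Int_absorb1)
  finally have 2: "(\<Sum>i\<in>B. EE (p i) (\<lambda>y. (g i y)^2)) = (\<Sum>i\<in>A. EE (p i) (\<lambda>y. (g' i y)^2))" by simp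
  show ?thesis unfolding 1 2
  proof (rule var_Pi)
    fix i assume "i \<in> A" thus "EE (p i) (g' i) = 0" using assms by (cases "i \<in> B") (auto simp: g'_def)
  qed (use assms in auto)
qed

lemma samp_ka:
  fixes p :: "'i \<Rightarrow> 'b::finite pmf" and h :: "'i \<Rightarrow> 'b \<Rightarrow> real"
  assumes "finite A" "B \<subseteq> A" "\<And>i y. 0 \<le> h i y" "\<And>i y. h i y \<le> 1"
  shows "EE (Pi_pmf A d p) (\<lambda>c. \<bar>\<Sum>i\<in>B. h i (c i) - EE (p i) (h i)\<bar>) \<le> sqrt (\<Sum>i\<in>B. EE (p i) (h i))"
proof -
  define g where "g = (\<lambda>i y. h i y - EE (p i) (h i))"
  have fin: "finite (set_pmf (Pi_pmf A d p))" using assms by (simp add: fin_Pi)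
  have "EE (Pi_pmf A d p) (\<lambda>c. \<bar>\<Sum>i\<in>B. g i (c i)\<bar>) \<le> sqrt (EE (Pi_pmf A d p) (\<lambda>c. (\<Sum>i\<in>B. g i (c i))^2))"
    by (rule EE_abs_sq[OF fin])
  also have "EE (Pi_pmf A d p) (\<lambda>c. (\<Sum>i\<in>B. g i (c i))^2) = (\<Sum>i\<in>B. EE (p i) (\<lambda>y. (g i y)^2))"
    by (rule var_Pi_subset[OF assms(1,2)]) (simp add: g_def EE_int)
  also have "\<dots> \<le> (\<Sum>i\<in>B. EE (p i) (h i))"
  proof (rule sum_mono)
    fix i
    have "EE (p i) (\<lambda>y. (g i y)^2) = EE (p i) (\<lambda>y. (h i y)^2) - (EE (p i) (h i))^2"
      by (simp add: g_def power2_eq_square algebra_simps EE_int)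
    also have "\<dots> \<le> EE (p i) (\<lambda>y. (h i y)^2)" by simp
    also have "\<dots> \<le> EE (p i) (h i)"
    proof (intro integral_mono)
      fix y show "(h i y)^2 \<le> h i y" using assms(3,4)[of i y]
        using mult_left_le[of "h i y" "h i y"] by (simp add: power2_eq_square)
    qed (auto simp: EE_int)
    finally show "EE (p i) (\<lambda>y. (g i y)^2) \<le> EE (p i) (h i)" .
  qed
  finally show ?thesis by (simp add: g_def)
qed

lemma sum_sqrt_le:
  fixes T :: "'a::finite \<Rightarrow> real"
  assumes "\<And>a. T a \<ge> 0"
  shows "(\<Sum>a\<in>UNIV. sqrt (T a)) \<le> sqrt (real CARD('a) * (\<Sum>a\<in>UNIV. T a))"
proof -
  have "(\<Sum>a\<in>UNIV. sqrt (T a))^2 \<le> (\<Sum>a\<in>UNIV. (sqrt (T a))^2) * card (UNIV :: 'a set)"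
    by (rule sum_squared_le_sum_of_squares)
  also have "\<dots> = real CARD('a) * (\<Sum>a\<in>UNIV. T a)" using assms by simp
  finally show ?thesis by (rule real_le_rsqrt)
qed

lemma sum_Pair: "(\<Sum>j\<in>S. F (k, j)) = (\<Sum>i\<in>Pair k ` S. F i)"
  by (simp add: sum.reindex inj_on_def)

lemma agents_finite: "finite (agents K N)"
proof -
  have "agents K N = Sigma {1..K} (\<lambda>k. {1..N k})" by (auto simp: agents_def)
  thus ?thesis by simp
qed

lemma sum_agents: "(\<Sum>i\<in>agents K N. F i) = (\<Sum>k\<in>{1..K}. \<Sum>j\<in>{1..N k}. F (k, j))"
proof -
  have "agents K N = Sigma {1..K} (\<lambda>k. {1..N k})" by (auto simp: agents_def)
  thus ?thesis by (simp add: sum.Sigma)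
qed

lemma Npop_card: "real (Npop K N) = (\<Sum>k\<in>{1..K}. real (N k))"
  by (simp add: Npop_def)

lemma jL1_div:
  fixes Np :: real and F G :: "'a::finite \<Rightarrow> nat \<Rightarrow> nat \<Rightarrow> real"
  assumes Np0: "Np \<ge> 0"
  shows "(\<Sum>a\<in>UNIV. \<Sum>k = 1..K. \<bar>(\<Sum>j = 1..N k. F a k j) / Np - (\<Sum>j = 1..N k. G a k j) / Np\<bar>) =
          (\<Sum>k = 1..K. (\<Sum>a\<in>UNIV. \<bar>\<Sum>j = 1..N k. F a k j - G a k j\<bar>) / Np)"
proof -
    have e: "\<bar>X/Np - Y/Np\<bar> = \<bar>X - Y\<bar>/Np" for X Y :: real
      using Np0 by (simp add: diff_divide_distrib[symmetric] abs_divide)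
    show ?thesis
      by (simp only: e sum_subtractf, subst sum.swap, simp only: sum_divide_distrib)
qed

lemma samp:
  fixes p :: "nat \<times> nat \<Rightarrow> 'b::finite pmf" and h :: "nat \<times> nat \<Rightarrow> 'a::finite \<Rightarrow> 'b \<Rightarrow> real"
  assumes N: "\<forall>k\<in>{1..K}. N k \<ge> 1"
    and h0: "\<And>i a y. 0 \<le> h i a y" and h1: "\<And>i y. (\<Sum>a\<in>UNIV. h i a y) \<le> 1"
  shows "EE (Pi_pmf (agents K N) d p)
     (\<lambda>c. jL1 K (\<lambda>a k. (\<Sum>j\<in>{1..N k}. h (k,j) a (c (k,j))) / real (Npop K N))
                 (\<lambda>a k. (\<Sum>j\<in>{1..N k}. EE (p (k,j)) (h (k,j) a)) / real (Npop K N)))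
     \<le> sqrt (real CARD('a)) * (\<Sum>k\<in>{1..K}. 1 / sqrt (real (N k)))"
proof -
  define A where "A = agents K N"
  define Np where "Np = real (Npop K N)"
  have fA: "finite A" by (simp add: A_def agents_finite)
  have fin: "finite (set_pmf (Pi_pmf A d p))" using fA by (simp add: fin_Pi)
  have hle1: "h i a y \<le> 1" for i a y
  proof -
    have "h i a y \<le> (\<Sum>a\<in>UNIV. h i a y)" by (rule member_le_sum) (auto simp: h0)
    thus ?thesis using h1[of i y] by linarith
  qed
  have NkNp: "real (N k) \<le> Np" if "k \<in> {1..K}" for k
    unfolding Np_def Npop_card by (rule member_le_sum) (use that in auto)
  have BA: "Pair k ` {1..N k} \<subseteq> A" if "k \<in> {1..K}" for k using that by (auto simp: A_def agents_def)
  have key: "(\<Sum>a\<in>UNIV. EE (Pi_pmf A d p) (\<lambda>c. \<bar>\<Sum>j\<in>{1..N k}. h (k,j) a (c (k,j)) - EE (p (k,j)) (h (k,j) a)\<bar>))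
        \<le> sqrt (real CARD('a)) * sqrt (real (N k))" if k: "k \<in> {1..K}" for k
  proof -
    have "(\<Sum>a\<in>UNIV. EE (Pi_pmf A d p) (\<lambda>c. \<bar>\<Sum>j\<in>{1..N k}. h (k,j) a (c (k,j)) - EE (p (k,j)) (h (k,j) a)\<bar>))
       \<le> (\<Sum>a\<in>UNIV. sqrt (\<Sum>i\<in>Pair k ` {1..N k}. EE (p i) (h i a)))"
    proof (rule sum_mono)
      fix a
      show "EE (Pi_pmf A d p) (\<lambda>c. \<bar>\<Sum>j\<in>{1..N k}. h (k,j) a (c (k,j)) - EE (p (k,j)) (h (k,j) a)\<bar>)
         \<le> sqrt (\<Sum>i\<in>Pair k ` {1..N k}. EE (p i) (h i a))"
        unfolding sum_Pair[where F="\<lambda>i. h i a (_ i) - EE (p i) (h i a)"]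
        using samp_ka[OF fA BA[OF k], of "\<lambda>i. h i a" d p] h0 hle1 by simp
    qed
    also have "\<dots> \<le> sqrt (real CARD('a) * (\<Sum>a\<in>UNIV. \<Sum>i\<in>Pair k ` {1..N k}. EE (p i) (h i a)))"
      by (rule sum_sqrt_le) (auto intro!: sum_nonneg integral_nonneg_AE simp: h0)
    also have "(\<Sum>a\<in>UNIV. \<Sum>i\<in>Pair k ` {1..N k}. EE (p i) (h i a)) \<le> real (N k)"
    proof -
      have "(\<Sum>a\<in>UNIV. \<Sum>i\<in>Pair k ` {1..N k}. EE (p i) (h i a))
          = (\<Sum>i\<in>Pair k ` {1..N k}. EE (p i) (\<lambda>y. \<Sum>a\<in>UNIV. h i a y))"
        by (subst sum.swap) (simp add: EE_int)
      also have "\<dots> \<le> (\<Sum>i\<in>Pair k ` {1..N k}. 1)"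
      proof (rule sum_mono)
        fix i
        have "EE (p i) (\<lambda>y. \<Sum>a\<in>UNIV. h i a y) \<le> EE (p i) (\<lambda>y. 1)"
          by (intro integral_mono) (auto simp: EE_int h1)
        thus "EE (p i) (\<lambda>y. \<Sum>a\<in>UNIV. h i a y) \<le> 1" by simp
      qed
      also have "\<dots> = real (N k)" by (simp add: card_image inj_on_def)
      finally show ?thesis .
    qed
    hence "sqrt (real CARD('a) * (\<Sum>a\<in>UNIV. \<Sum>i\<in>Pair k ` {1..N k}. EE (p i) (h i a)))
         \<le> sqrt (real CARD('a) * real (N k))" by (simp add: mult_left_mono)
    finally show ?thesis by (simp add: real_sqrt_mult)
  qed
  have "EE (Pi_pmf A d p)
     (\<lambda>c. jL1 K (\<lambda>a k. (\<Sum>j\<in>{1..N k}. h (k,j) a (c (k,j))) / Np)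
                 (\<lambda>a k. (\<Sum>j\<in>{1..N k}. EE (p (k,j)) (h (k,j) a)) / Np))
     = EE (Pi_pmf A d p) (\<lambda>c. \<Sum>k\<in>{1..K}. (\<Sum>a\<in>UNIV. \<bar>\<Sum>j\<in>{1..N k}. h (k,j) a (c (k,j)) - EE (p (k,j)) (h (k,j) a)\<bar>) / Np)"
    unfolding jL1_def
  proof (intro Bochner_Integration.integral_cong refl)
    fix c
    have Np0: "Np \<ge> 0" by (simp add: Np_def)
    show "(\<Sum>a\<in>UNIV. \<Sum>k = 1..K. \<bar>(\<Sum>j = 1..N k. h (k, j) a (c (k, j))) / Np - (\<Sum>j = 1..N k. EE (p (k, j)) (h (k, j) a)) / Np\<bar>) =
          (\<Sum>k = 1..K. (\<Sum>a\<in>UNIV. \<bar>\<Sum>j = 1..N k. h (k, j) a (c (k, j)) - EE (p (k, j)) (h (k, j) a)\<bar>) / Np)"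
      using jL1_div[OF Np0, where F="\<lambda>a k j. h (k, j) a (c (k, j))" and G="\<lambda>a k j. EE (p (k, j)) (h (k, j) a)"] by simp
  qed
  also have "\<dots> = (\<Sum>k\<in>{1..K}. (\<Sum>a\<in>UNIV. EE (Pi_pmf A d p) (\<lambda>c. \<bar>\<Sum>j\<in>{1..N k}. h (k,j) a (c (k,j)) - EE (p (k,j)) (h (k,j) a)\<bar>)) / Np)"
    using fin by (simp add: EE_int)
  also have "\<dots> \<le> (\<Sum>k\<in>{1..K}. sqrt (real CARD('a)) * (1 / sqrt (real (N k))))"
  proof (rule sum_mono)
    fix k assume k: "k \<in> {1..K}"
    have Nk: "real (N k) \<ge> 1" using N k by auto
    have "(\<Sum>a\<in>UNIV. EE (Pi_pmf A d p) (\<lambda>c. \<bar>\<Sum>j\<in>{1..N k}. h (k,j) a (c (k,j)) - EE (p (k,j)) (h (k,j) a)\<bar>)) / Np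
        \<le> sqrt (real CARD('a)) * sqrt (real (N k)) / Np"
      using key[OF k] NkNp[OF k] Nk by (intro divide_right_mono) auto
    also have "\<dots> \<le> sqrt (real CARD('a)) * sqrt (real (N k)) / real (N k)"
      using NkNp[OF k] Nk by (intro divide_left_mono mult_nonneg_nonneg) auto
    also have "sqrt (real CARD('a)) * sqrt (real (N k)) / real (N k) = sqrt (real CARD('a)) * (1 / sqrt (real (N k)))"
    proof -
      have s: "sqrt (real (N k)) * sqrt (real (N k)) = real (N k)" using Nk by simp
      have sp: "sqrt (real (N k)) > 0" using Nk by simp
      show ?thesis using s sp Nk by (simp add: field_simps)
    qed
    finally show "(\<Sum>a\<in>UNIV. EE (Pi_pmf A d p) (\<lambda>c. \<bar>\<Sum>j\<in>{1..N k}. h (k,j) a (c (k,j)) - EE (p (k,j)) (h (k,j) a)\<bar>)) / Np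
        \<le> sqrt (real CARD('a)) * (1 / sqrt (real (N k)))" .
  qed
  also have "\<dots> = sqrt (real CARD('a)) * (\<Sum>k\<in>{1..K}. 1 / sqrt (real (N k)))"
    by (simp add: sum_distrib_left)
  finally show ?thesis unfolding A_def Np_def .
qed

lemma sum_pmf_UNIV [simp]: "(\<Sum>x\<in>UNIV. pmf (p :: 'a::finite pmf) x) = 1"
  by (rule sum_pmf_eq_1) auto

lemma Npop_pos: "K \<ge> 1 \<Longrightarrow> \<forall>k\<in>{1..K}. N k \<ge> 1 \<Longrightarrow> Npop K N > 0"
  unfolding Npop_def by (metis atLeastAtMost_iff finite_atLeastAtMost gr0I le_refl less_one not_one_le_zero sum_eq_0_iff)

lemma emp_jdist:
  assumes "Npop K N > 0"
  shows "is_jdist K (emp K N (c :: nat \<times> nat \<Rightarrow> 'a::finite))"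
proof -
  have "(\<Sum>a\<in>UNIV. \<Sum>k\<in>{1..K}. emp K N c a k)
      = (\<Sum>k\<in>{1..K}. (\<Sum>j\<in>{1..N k}. \<Sum>a\<in>UNIV. (if c (k, j) = a then 1 else 0)) / real (Npop K N))"
    unfolding emp_def by (subst sum.swap) (simp add: sum_divide_distrib[symmetric] sum.swap[of _ UNIV])
  also have "\<dots> = (\<Sum>k\<in>{1..K}. real (N k) / real (Npop K N))"
    by simp
  also have "\<dots> = (\<Sum>k\<in>{1..K}. real (N k)) / real (Npop K N)" by (simp add: sum_divide_distrib)
  also have "\<dots> = 1" using assms unfolding Npop_card[symmetric] by simp
  finally show ?thesis unfolding is_jdist_def by (auto simp: emp_def intro!: divide_nonneg_nonneg sum_nonneg)
qed

lemma jdist_sum1: "is_jdist K m \<Longrightarrow> (\<Sum>k\<in>{1..K}. \<Sum>a\<in>UNIV. m a k) = 1"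
  unfolding is_jdist_def by (subst sum.swap) simp

lemma nuMF_jdist:
  assumes "is_jdist K m"
  shows "is_jdist K (nuMF pit m :: 'u::finite \<Rightarrow> nat \<Rightarrow> real)"
proof -
  have "(\<Sum>u\<in>UNIV. \<Sum>k\<in>{1..K}. nuMF pit m u k) = (\<Sum>k\<in>{1..K}. \<Sum>u\<in>UNIV. nuMF pit m u k)"
    by (rule sum.swap)
  also have "\<dots> = (\<Sum>k\<in>{1..K}. \<Sum>x\<in>UNIV. m x k)"
  proof (rule sum.cong[OF refl])
    fix k
    have "(\<Sum>u\<in>UNIV. nuMF pit m u k) = (\<Sum>x\<in>UNIV. \<Sum>u\<in>UNIV. pmf (pit k x m) u * m x k)"
      unfolding nuMF_def by (rule sum.swap)
    also have "\<dots> = (\<Sum>x\<in>UNIV. m x k)"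
      by (simp add: sum_distrib_right[symmetric])
    finally show "(\<Sum>u\<in>UNIV. nuMF pit m u k) = (\<Sum>x\<in>UNIV. m x k)" .
  qed
  also have "\<dots> = 1" using jdist_sum1[OF assms] by simp
  finally show ?thesis using assms unfolding is_jdist_def nuMF_def
    by (auto intro!: sum_nonneg mult_nonneg_nonneg)
qed

lemma PMF_jdist:
  assumes "is_jdist K m"
  shows "is_jdist K (PMF P pit m)"
proof -
  have "(\<Sum>x'\<in>UNIV. \<Sum>k\<in>{1..K}. PMF P pit m x' k) = (\<Sum>k\<in>{1..K}. \<Sum>x'\<in>UNIV. PMF P pit m x' k)"
    by (rule sum.swap)
  also have "\<dots> = (\<Sum>k\<in>{1..K}. \<Sum>x\<in>UNIV. m x k)"
  proof (rule sum.cong[OF refl])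
    fix k
    have "(\<Sum>x'\<in>UNIV. PMF P pit m x' k) = (\<Sum>x\<in>UNIV. \<Sum>x'\<in>UNIV. \<Sum>u\<in>UNIV. m x k * pmf (pit k x m) u * pmf (P k x u m (nuMF pit m)) x')"
      unfolding PMF_def by (rule sum.swap)
    also have "\<dots> = (\<Sum>x\<in>UNIV. \<Sum>u\<in>UNIV. \<Sum>x'\<in>UNIV. m x k * pmf (pit k x m) u * pmf (P k x u m (nuMF pit m)) x')"
      by (intro sum.cong refl sum.swap)
    also have "\<dots> = (\<Sum>x\<in>UNIV. \<Sum>u\<in>UNIV. m x k * pmf (pit k x m) u)"
      by (simp add: sum_distrib_left[symmetric])
    also have "\<dots> = (\<Sum>x\<in>UNIV. m x k)"
      by (simp add: sum_distrib_left[symmetric])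
    finally show "(\<Sum>x'\<in>UNIV. PMF P pit m x' k) = (\<Sum>x\<in>UNIV. m x k)" .
  qed
  also have "\<dots> = 1" using jdist_sum1[OF assms] by simp
  finally show ?thesis using assms unfolding is_jdist_def PMF_def
    by (auto intro!: sum_nonneg mult_nonneg_nonneg)
qed

lemma mf_traj_jdist: "is_jdist K mu0 \<Longrightarrow> is_jdist K (mf_traj P pl mu0 t)"
  by (induction t) (auto intro: PMF_jdist)

lemma jL1_tri: "jL1 K a c \<le> jL1 K a b + jL1 K b c"
  unfolding jL1_def by (simp add: sum.distrib[symmetric] sum_mono abs_triangle_ineq4 order_trans[OF _ abs_triangle_ineq])

lemma jL1_sym: "jL1 K a b = jL1 K b a"
  unfolding jL1_def by (simp add: abs_minus_commute)

lemma jL1_nonneg: "jL1 K a b \<ge> 0"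
  unfolding jL1_def by (simp add: sum_nonneg)

lemma jL1_self [simp]: "jL1 K a a = 0"
  unfolding jL1_def by simp

lemma pL1_nonneg: "pL1 p q \<ge> 0"
  unfolding pL1_def by (simp add: sum_nonneg)

lemma prod_diff_bound:
  fixes a1 a2 b1 b2 :: real
  shows "\<bar>a1 * b1 - a2 * b2\<bar> \<le> \<bar>a1 - a2\<bar> * \<bar>b1\<bar> + \<bar>a2\<bar> * \<bar>b1 - b2\<bar>"
proof -
  have "a1 * b1 - a2 * b2 = (a1 - a2) * b1 + a2 * (b1 - b2)" by (simp add: algebra_simps)
  thus ?thesis by (metis abs_mult abs_triangle_ineq)
qed

lemma sum3_swap: "(\<Sum>u\<in>U. \<Sum>k\<in>KS. \<Sum>x\<in>X. F u k x) = (\<Sum>k\<in>KS. \<Sum>x\<in>X. \<Sum>u\<in>U. F u k x)"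
proof -
  have "(\<Sum>u\<in>U. \<Sum>k\<in>KS. \<Sum>x\<in>X. F u k x) = (\<Sum>k\<in>KS. \<Sum>u\<in>U. \<Sum>x\<in>X. F u k x)" by (rule sum.swap)
  also have "\<dots> = (\<Sum>k\<in>KS. \<Sum>x\<in>X. \<Sum>u\<in>U. F u k x)" by (intro sum.cong refl sum.swap)
  finally show ?thesis .
qed

lemma jL1_alt: "jL1 K m1 m2 = (\<Sum>k\<in>{1..K}. \<Sum>x\<in>UNIV. \<bar>m1 x k - m2 x k\<bar>)"
  unfolding jL1_def by (rule sum.swap)

lemma jdist_weight: "is_jdist K m \<Longrightarrow> (\<Sum>k\<in>{1..K}. \<Sum>x\<in>UNIV. m x k * c) = c"
  using jdist_sum1[of K m] by (simp add: sum_distrib_right[symmetric])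

lemma jdist_nonneg: "is_jdist K m \<Longrightarrow> 0 \<le> m x k"
  unfolding is_jdist_def by auto

lemma jdist_weight_le:
  assumes "is_jdist K m" "\<And>k x. k \<in> {1..K} \<Longrightarrow> f k x \<le> c"
  shows "(\<Sum>k\<in>{1..K}. \<Sum>x\<in>UNIV. m x k * f k x) \<le> c"
proof -
  have "(\<Sum>k\<in>{1..K}. \<Sum>x\<in>UNIV. m x k * f k x) \<le> (\<Sum>k\<in>{1..K}. \<Sum>x\<in>UNIV. m x k * c)"
    using assms by (intro sum_mono mult_left_mono) (auto simp: jdist_nonneg)
  thus ?thesis using jdist_weight[OF assms(1)] by simp
qed

lemma lip_nu:
  fixes pit :: "nat \<Rightarrow> 'x::finite \<Rightarrow> ('x \<Rightarrow> nat \<Rightarrow> real) \<Rightarrow> 'u::finite pmf"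
  assumes j1: "is_jdist K m1" and j2: "is_jdist K m2"
    and pol: "\<And>k x. k \<in> {1..K} \<Longrightarrow> pL1 (pit k x m1) (pit k x m2) \<le> LQ * jL1 K m1 m2"
  shows "jL1 K (nuMF pit m1) (nuMF pit m2) \<le> (1 + LQ) * jL1 K m1 m2"
proof -
  let ?p1 = "\<lambda>k x u. pmf (pit k x m1) u" and ?p2 = "\<lambda>k x u. pmf (pit k x m2) u"
  have "jL1 K (nuMF pit m1) (nuMF pit m2) = (\<Sum>u\<in>UNIV. \<Sum>k\<in>{1..K}. \<bar>\<Sum>x\<in>UNIV. m1 x k * ?p1 k x u - m2 x k * ?p2 k x u\<bar>)"
    unfolding jL1_def nuMF_def by (simp add: sum_subtractf[symmetric] mult.commute)
  also have "\<dots> \<le> (\<Sum>u\<in>UNIV. \<Sum>k\<in>{1..K}. \<Sum>x\<in>UNIV. \<bar>m1 x k - m2 x k\<bar> * ?p1 k x u + m2 x k * \<bar>?p1 k x u - ?p2 k x u\<bar>)"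
  proof (intro sum_mono order_trans[OF sum_abs])
    fix u k x
    show "\<bar>m1 x k * ?p1 k x u - m2 x k * ?p2 k x u\<bar> \<le> \<bar>m1 x k - m2 x k\<bar> * ?p1 k x u + m2 x k * \<bar>?p1 k x u - ?p2 k x u\<bar>"
      using prod_diff_bound[of "m1 x k" "?p1 k x u" "m2 x k" "?p2 k x u"] jdist_nonneg[OF j2, of x k] by simp
  qed
  also have "\<dots> = (\<Sum>k\<in>{1..K}. \<Sum>x\<in>UNIV. \<Sum>u\<in>UNIV. \<bar>m1 x k - m2 x k\<bar> * ?p1 k x u + m2 x k * \<bar>?p1 k x u - ?p2 k x u\<bar>)"
    by (rule sum3_swap)
  also have "\<dots> = (\<Sum>k\<in>{1..K}. \<Sum>x\<in>UNIV. \<bar>m1 x k - m2 x k\<bar>) + (\<Sum>k\<in>{1..K}. \<Sum>x\<in>UNIV. m2 x k * pL1 (pit k x m1) (pit k x m2))"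
    by (simp add: sum.distrib sum_distrib_left[symmetric] pL1_def)
  also have "\<dots> \<le> jL1 K m1 m2 + LQ * jL1 K m1 m2"
    using jdist_weight_le[OF j2, of "\<lambda>k x. pL1 (pit k x m1) (pit k x m2)" "LQ * jL1 K m1 m2"] pol
    by (simp add: jL1_alt)
  finally show ?thesis by (simp add: algebra_simps)
qed

lemma tri3_bound:
  fixes m1 m2 a1 a2 b1 b2 :: real
  assumes "m2 \<ge> 0" "a1 \<ge> 0" "a2 \<ge> 0"
  shows "\<bar>m1 * a1 * b1 - m2 * a2 * b2\<bar> \<le> \<bar>m1 - m2\<bar> * a1 * \<bar>b1\<bar> + m2 * \<bar>a1 - a2\<bar> * \<bar>b1\<bar> + m2 * a2 * \<bar>b1 - b2\<bar>"
proof -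
  have "m1 * a1 * b1 - m2 * a2 * b2 = (m1 - m2) * a1 * b1 + m2 * (a1 - a2) * b1 + m2 * a2 * (b1 - b2)"
    by (simp add: algebra_simps)
  also have "\<bar>\<dots>\<bar> \<le> \<bar>(m1 - m2) * a1 * b1\<bar> + \<bar>m2 * (a1 - a2) * b1\<bar> + \<bar>m2 * a2 * (b1 - b2)\<bar>"
    by (rule order_trans[OF abs_triangle_ineq add_right_mono[OF abs_triangle_ineq]])
  also have "\<dots> = \<bar>m1 - m2\<bar> * a1 * \<bar>b1\<bar> + m2 * \<bar>a1 - a2\<bar> * \<bar>b1\<bar> + m2 * a2 * \<bar>b1 - b2\<bar>"
    using assms by (simp add: abs_mult)
  finally show ?thesis .
qed

lemma sum4_swap: "(\<Sum>y\<in>Y. \<Sum>k\<in>KS. \<Sum>x\<in>X. \<Sum>u\<in>U. F y k x u) = (\<Sum>k\<in>KS. \<Sum>x\<in>X. \<Sum>u\<in>U. \<Sum>y\<in>Y. F y k x u)"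
proof -
  have "(\<Sum>y\<in>Y. \<Sum>k\<in>KS. \<Sum>x\<in>X. \<Sum>u\<in>U. F y k x u) = (\<Sum>k\<in>KS. \<Sum>x\<in>X. \<Sum>y\<in>Y. \<Sum>u\<in>U. F y k x u)"
    by (rule sum3_swap)
  also have "\<dots> = (\<Sum>k\<in>KS. \<Sum>x\<in>X. \<Sum>u\<in>U. \<Sum>y\<in>Y. F y k x u)" by (intro sum.cong refl sum.swap)
  finally show ?thesis .
qed

lemma lip_PMF:
  fixes pit :: "nat \<Rightarrow> 'x::finite \<Rightarrow> ('x \<Rightarrow> nat \<Rightarrow> real) \<Rightarrow> 'u::finite pmf"
    and P :: "nat \<Rightarrow> 'x \<Rightarrow> 'u \<Rightarrow> ('x \<Rightarrow> nat \<Rightarrow> real) \<Rightarrow> ('u \<Rightarrow> nat \<Rightarrow> real) \<Rightarrow> 'x pmf"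
  assumes j1: "is_jdist K m1" and j2: "is_jdist K m2"
    and pol: "\<And>k x. k \<in> {1..K} \<Longrightarrow> pL1 (pit k x m1) (pit k x m2) \<le> LQ * jL1 K m1 m2"
    and Plip: "\<forall>k\<in>{1..K}. \<forall>x u mu1 nu1 mu2 nu2.
                  is_jdist K mu1 \<longrightarrow> is_jdist K nu1 \<longrightarrow> is_jdist K mu2 \<longrightarrow> is_jdist K nu2 \<longrightarrow>
                  pL1 (P k x u mu1 nu1) (P k x u mu2 nu2) \<le> LP * (jL1 K mu1 mu2 + jL1 K nu1 nu2)"
    and LP: "LP \<ge> 0"
  shows "jL1 K (PMF P pit m1) (PMF P pit m2) \<le> (1 + LQ + LP * (2 + LQ)) * jL1 K m1 m2"
proof -
  let ?p1 = "\<lambda>k x u. pmf (pit k x m1) u" and ?p2 = "\<lambda>k x u. pmf (pit k x m2) u"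
  let ?P1 = "\<lambda>k x u y. pmf (P k x u m1 (nuMF pit m1)) y" and ?P2 = "\<lambda>k x u y. pmf (P k x u m2 (nuMF pit m2)) y"
  have "jL1 K (PMF P pit m1) (PMF P pit m2) = (\<Sum>y\<in>UNIV. \<Sum>k\<in>{1..K}. \<bar>\<Sum>x\<in>UNIV. \<Sum>u\<in>UNIV. m1 x k * ?p1 k x u * ?P1 k x u y - m2 x k * ?p2 k x u * ?P2 k x u y\<bar>)"
    unfolding jL1_def PMF_def by (simp add: sum_subtractf[symmetric])
  also have "\<dots> \<le> (\<Sum>y\<in>UNIV. \<Sum>k\<in>{1..K}. \<Sum>x\<in>UNIV. \<Sum>u\<in>UNIV.
      \<bar>m1 x k - m2 x k\<bar> * ?p1 k x u * ?P1 k x u y + m2 x k * \<bar>?p1 k x u - ?p2 k x u\<bar> * ?P1 k x u y + m2 x k * ?p2 k x u * \<bar>?P1 k x u y - ?P2 k x u y\<bar>)"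
  proof (intro sum_mono order_trans[OF sum_abs])
    fix y k x u
    show "\<bar>m1 x k * ?p1 k x u * ?P1 k x u y - m2 x k * ?p2 k x u * ?P2 k x u y\<bar> \<le>
      \<bar>m1 x k - m2 x k\<bar> * ?p1 k x u * ?P1 k x u y + m2 x k * \<bar>?p1 k x u - ?p2 k x u\<bar> * ?P1 k x u y + m2 x k * ?p2 k x u * \<bar>?P1 k x u y - ?P2 k x u y\<bar>"
      using tri3_bound[of "m2 x k" "?p1 k x u" "?p2 k x u" "m1 x k" "?P1 k x u y" "?P2 k x u y"] jdist_nonneg[OF j2, of x k]
      by simp
  qed
  also have "\<dots> = (\<Sum>k\<in>{1..K}. \<Sum>x\<in>UNIV. \<Sum>u\<in>UNIV. \<Sum>y\<in>UNIV.
      \<bar>m1 x k - m2 x k\<bar> * ?p1 k x u * ?P1 k x u y + m2 x k * \<bar>?p1 k x u - ?p2 k x u\<bar> * ?P1 k x u y + m2 x k * ?p2 k x u * \<bar>?P1 k x u y - ?P2 k x u y\<bar>)"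
    by (rule sum4_swap)
  also have "\<dots> = (\<Sum>k\<in>{1..K}. \<Sum>x\<in>UNIV. \<Sum>u\<in>UNIV.
      \<bar>m1 x k - m2 x k\<bar> * ?p1 k x u + m2 x k * \<bar>?p1 k x u - ?p2 k x u\<bar> + m2 x k * ?p2 k x u * pL1 (P k x u m1 (nuMF pit m1)) (P k x u m2 (nuMF pit m2)))"
    by (simp add: sum.distrib sum_distrib_left[symmetric] pL1_def)
  also have "\<dots> = (\<Sum>k\<in>{1..K}. \<Sum>x\<in>UNIV. \<bar>m1 x k - m2 x k\<bar>) + (\<Sum>k\<in>{1..K}. \<Sum>x\<in>UNIV. m2 x k * pL1 (pit k x m1) (pit k x m2))
      + (\<Sum>k\<in>{1..K}. \<Sum>x\<in>UNIV. m2 x k * (\<Sum>u\<in>UNIV. ?p2 k x u * pL1 (P k x u m1 (nuMF pit m1)) (P k x u m2 (nuMF pit m2))))"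
    by (simp add: sum.distrib sum_distrib_left[symmetric] pL1_def mult.assoc)
  also have "\<dots> \<le> jL1 K m1 m2 + LQ * jL1 K m1 m2 + LP * (jL1 K m1 m2 + (1 + LQ) * jL1 K m1 m2)"
  proof (intro add_mono)
    show "(\<Sum>k\<in>{1..K}. \<Sum>x\<in>UNIV. \<bar>m1 x k - m2 x k\<bar>) \<le> jL1 K m1 m2" by (simp add: jL1_alt)
    show "(\<Sum>k\<in>{1..K}. \<Sum>x\<in>UNIV. m2 x k * pL1 (pit k x m1) (pit k x m2)) \<le> LQ * jL1 K m1 m2"
      by (rule jdist_weight_le[OF j2]) (rule pol)
    have nu: "jL1 K (nuMF pit m1) (nuMF pit m2) \<le> (1 + LQ) * jL1 K m1 m2"
      by (rule lip_nu[OF j1 j2 pol])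
    show "(\<Sum>k\<in>{1..K}. \<Sum>x\<in>UNIV. m2 x k * (\<Sum>u\<in>UNIV. ?p2 k x u * pL1 (P k x u m1 (nuMF pit m1)) (P k x u m2 (nuMF pit m2))))
        \<le> LP * (jL1 K m1 m2 + (1 + LQ) * jL1 K m1 m2)"
    proof (rule jdist_weight_le[OF j2])
      fix k x assume k: "k \<in> {1..K}"
      have "(\<Sum>u\<in>UNIV. ?p2 k x u * pL1 (P k x u m1 (nuMF pit m1)) (P k x u m2 (nuMF pit m2)))
          \<le> (\<Sum>u\<in>UNIV. ?p2 k x u * (LP * (jL1 K m1 m2 + (1 + LQ) * jL1 K m1 m2)))"
      proof (intro sum_mono mult_left_mono)
        fix u
        have "pL1 (P k x u m1 (nuMF pit m1)) (P k x u m2 (nuMF pit m2)) \<le> LP * (jL1 K m1 m2 + jL1 K (nuMF pit m1) (nuMF pit m2))"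
          using Plip k j1 j2 nuMF_jdist[OF j1] nuMF_jdist[OF j2] by blast
        also have "\<dots> \<le> LP * (jL1 K m1 m2 + (1 + LQ) * jL1 K m1 m2)"
          using nu LP by (intro mult_left_mono) auto
        finally show "pL1 (P k x u m1 (nuMF pit m1)) (P k x u m2 (nuMF pit m2)) \<le> LP * (jL1 K m1 m2 + (1 + LQ) * jL1 K m1 m2)" .
      qed simp
      also have "\<dots> = LP * (jL1 K m1 m2 + (1 + LQ) * jL1 K m1 m2)"
        by (simp add: sum_distrib_right[symmetric])
      finally show "(\<Sum>u\<in>UNIV. ?p2 k x u * pL1 (P k x u m1 (nuMF pit m1)) (P k x u m2 (nuMF pit m2)))
          \<le> LP * (jL1 K m1 m2 + (1 + LQ) * jL1 K m1 m2)" .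
    qed
  qed
  finally show ?thesis by (simp add: algebra_simps)
qed

lemma lip_r:
  fixes pit :: "nat \<Rightarrow> 'x::finite \<Rightarrow> ('x \<Rightarrow> nat \<Rightarrow> real) \<Rightarrow> 'u::finite pmf"
    and r :: "nat \<Rightarrow> 'x \<Rightarrow> 'u \<Rightarrow> ('x \<Rightarrow> nat \<Rightarrow> real) \<Rightarrow> ('u \<Rightarrow> nat \<Rightarrow> real) \<Rightarrow> real"
  assumes j1: "is_jdist K m1" and j2: "is_jdist K m2"
    and pol: "\<And>k x. k \<in> {1..K} \<Longrightarrow> pL1 (pit k x m1) (pit k x m2) \<le> LQ * jL1 K m1 m2"
    and r_bound: "\<forall>k\<in>{1..K}. \<forall>x u mu nu. is_jdist K mu \<longrightarrow> is_jdist K nu \<longrightarrow>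
                    \<bar>r k x u mu nu\<bar> \<le> MR"
    and r_lip: "\<forall>k\<in>{1..K}. \<forall>x u mu1 nu1 mu2 nu2.
                  is_jdist K mu1 \<longrightarrow> is_jdist K nu1 \<longrightarrow> is_jdist K mu2 \<longrightarrow> is_jdist K nu2 \<longrightarrow>
                  \<bar>r k x u mu1 nu1 - r k x u mu2 nu2\<bar> \<le> LR * (jL1 K mu1 mu2 + jL1 K nu1 nu2)"
    and MR: "MR \<ge> 0" and LR: "LR \<ge> 0"
  shows "\<bar>(\<Sum>k\<in>{1..K}. rMF r pit m1 k) - (\<Sum>k\<in>{1..K}. rMF r pit m2 k)\<bar> \<le> (MR * (1 + LQ) + LR * (2 + LQ)) * jL1 K m1 m2"
proof -
  let ?p1 = "\<lambda>k x u. pmf (pit k x m1) u" and ?p2 = "\<lambda>k x u. pmf (pit k x m2) u"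
  let ?r1 = "\<lambda>k x u. r k x u m1 (nuMF pit m1)" and ?r2 = "\<lambda>k x u. r k x u m2 (nuMF pit m2)"
  have nu: "jL1 K (nuMF pit m1) (nuMF pit m2) \<le> (1 + LQ) * jL1 K m1 m2"
    by (rule lip_nu[OF j1 j2 pol])
  have rb: "\<bar>?r1 k x u\<bar> \<le> MR" if "k \<in> {1..K}" for k x u
    using r_bound that j1 nuMF_jdist[OF j1] by blast
  have rl: "\<bar>?r1 k x u - ?r2 k x u\<bar> \<le> LR * (jL1 K m1 m2 + (1 + LQ) * jL1 K m1 m2)" if "k \<in> {1..K}" for k x u
  proof -
    have "\<bar>?r1 k x u - ?r2 k x u\<bar> \<le> LR * (jL1 K m1 m2 + jL1 K (nuMF pit m1) (nuMF pit m2))"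
      using r_lip that j1 j2 nuMF_jdist[OF j1] nuMF_jdist[OF j2] by blast
    also have "\<dots> \<le> LR * (jL1 K m1 m2 + (1 + LQ) * jL1 K m1 m2)"
      using nu LR by (intro mult_left_mono) auto
    finally show ?thesis .
  qed
  have "\<bar>(\<Sum>k\<in>{1..K}. rMF r pit m1 k) - (\<Sum>k\<in>{1..K}. rMF r pit m2 k)\<bar>
      = \<bar>\<Sum>k\<in>{1..K}. \<Sum>x\<in>UNIV. \<Sum>u\<in>UNIV. m1 x k * ?p1 k x u * ?r1 k x u - m2 x k * ?p2 k x u * ?r2 k x u\<bar>"
    unfolding rMF_def by (simp add: sum_subtractf[symmetric])
  also have "\<dots> \<le> (\<Sum>k\<in>{1..K}. \<Sum>x\<in>UNIV. \<Sum>u\<in>UNIV.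
       \<bar>m1 x k - m2 x k\<bar> * ?p1 k x u * MR + m2 x k * \<bar>?p1 k x u - ?p2 k x u\<bar> * MR
        + m2 x k * ?p2 k x u * (LR * (jL1 K m1 m2 + (1 + LQ) * jL1 K m1 m2)))"
  proof (intro order_trans[OF sum_abs] sum_mono)
      fix k x u assume k: "k \<in> {1..K}"
      have m2: "m2 x k \<ge> 0" by (rule jdist_nonneg[OF j2])
      have "\<bar>m1 x k * ?p1 k x u * ?r1 k x u - m2 x k * ?p2 k x u * ?r2 k x u\<bar>
         \<le> \<bar>m1 x k - m2 x k\<bar> * ?p1 k x u * \<bar>?r1 k x u\<bar> + m2 x k * \<bar>?p1 k x u - ?p2 k x u\<bar> * \<bar>?r1 k x u\<bar> + m2 x k * ?p2 k x u * \<bar>?r1 k x u - ?r2 k x u\<bar>"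
        by (rule tri3_bound) (simp_all add: m2)
      also have "\<dots> \<le> \<bar>m1 x k - m2 x k\<bar> * ?p1 k x u * MR + m2 x k * \<bar>?p1 k x u - ?p2 k x u\<bar> * MR
        + m2 x k * ?p2 k x u * (LR * (jL1 K m1 m2 + (1 + LQ) * jL1 K m1 m2))"
        using rb[OF k, of x u] rl[OF k, of x u] m2
        by (intro add_mono mult_left_mono) (auto intro!: mult_nonneg_nonneg)
      finally show "\<bar>m1 x k * ?p1 k x u * ?r1 k x u - m2 x k * ?p2 k x u * ?r2 k x u\<bar> \<le> \<bar>m1 x k - m2 x k\<bar> * ?p1 k x u * MR + m2 x k * \<bar>?p1 k x u - ?p2 k x u\<bar> * MR
        + m2 x k * ?p2 k x u * (LR * (jL1 K m1 m2 + (1 + LQ) * jL1 K m1 m2))" .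
  qed
  also have "\<dots> = MR * (\<Sum>k\<in>{1..K}. \<Sum>x\<in>UNIV. \<bar>m1 x k - m2 x k\<bar>) + MR * (\<Sum>k\<in>{1..K}. \<Sum>x\<in>UNIV. m2 x k * pL1 (pit k x m1) (pit k x m2))
      + (\<Sum>k\<in>{1..K}. \<Sum>x\<in>UNIV. m2 x k * (LR * (jL1 K m1 m2 + (1 + LQ) * jL1 K m1 m2)))"
    by (simp add: sum.distrib sum_distrib_left[symmetric] sum_distrib_right[symmetric] pL1_def algebra_simps)
  also have "\<dots> \<le> MR * jL1 K m1 m2 + MR * (LQ * jL1 K m1 m2) + LR * (jL1 K m1 m2 + (1 + LQ) * jL1 K m1 m2)"
  proof (intro add_mono mult_left_mono MR)
    show "(\<Sum>k\<in>{1..K}. \<Sum>x\<in>UNIV. \<bar>m1 x k - m2 x k\<bar>) \<le> jL1 K m1 m2" by (simp add: jL1_alt)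
    show "(\<Sum>k\<in>{1..K}. \<Sum>x\<in>UNIV. m2 x k * pL1 (pit k x m1) (pit k x m2)) \<le> LQ * jL1 K m1 m2"
      by (rule jdist_weight_le[OF j2]) (rule pol)
    show "(\<Sum>k\<in>{1..K}. \<Sum>x\<in>UNIV. m2 x k * (LR * (jL1 K m1 m2 + (1 + LQ) * jL1 K m1 m2))) \<le> LR * (jL1 K m1 m2 + (1 + LQ) * jL1 K m1 m2)"
      by (rule eq_refl, rule jdist_weight[OF j2])
  qed
  finally show ?thesis by (simp add: algebra_simps)
qed

lemma FIB:
  fixes c :: "nat \<times> nat \<Rightarrow> 'a::finite"
  assumes "k \<in> {1..K}"
  shows "(\<Sum>x\<in>UNIV. emp K N c x k * F x) = (\<Sum>j\<in>{1..N k}. F (c (k, j))) / real (Npop K N)"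
proof -
  have "(\<Sum>x\<in>UNIV. emp K N c x k * F x) = (\<Sum>x\<in>UNIV. \<Sum>j\<in>{1..N k}. (if c (k, j) = x then F x else 0)) / real (Npop K N)"
  proof -
    have ifmul: "(if P then 1 else 0) * (y::real) = (if P then y else 0)" for P y by simp
    have pw: "emp K N c x k * F x = (\<Sum>j\<in>{1..N k}. if c (k,j) = x then F x else 0) / real (Npop K N)" for x
      using assms by (simp add: emp_def sum_distrib_right ifmul)
    show ?thesis by (simp only: pw sum_divide_distrib)
  qed
  also have "\<dots> = (\<Sum>j\<in>{1..N k}. \<Sum>x\<in>UNIV. (if c (k, j) = x then F x else 0)) / real (Npop K N)"
    by (subst sum.swap) (rule refl)
  also have "\<dots> = (\<Sum>j\<in>{1..N k}. F (c (k, j))) / real (Npop K N)"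
    by (simp add: sum.delta')
  finally show ?thesis .
qed

lemma EE_ind: "EE (p :: 'a::finite pmf) (\<lambda>y. if y = a then 1 else 0) = pmf p a"
proof -
  have "EE p (\<lambda>y. if y = a then 1 else 0) = (\<Sum>y\<in>UNIV. (if y = a then 1 else 0) * pmf p y)"
    by (rule EE_fin) auto
  also have "\<dots> = (\<Sum>y\<in>UNIV. if y = a then pmf p y else 0)" by (intro sum.cong) auto
  finally show ?thesis by simp
qed

lemma EE_Pi_comp:
  assumes "finite A" "i \<in> A"
  shows "EE (Pi_pmf A d p) (\<lambda>c. f (c i)) = EE (p i) f"
proof -
  have "EE (p i) f = EE (map_pmf (\<lambda>c. c i) (Pi_pmf A d p)) f"
    using Pi_pmf_component[OF assms(1), of i d p] assms(2) by simp
  thus ?thesis by simp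
qed

lemma jL1_cong:
  assumes "\<And>a k. k \<in> {1..K} \<Longrightarrow> m1 a k = m1' a k" "\<And>a k. k \<in> {1..K} \<Longrightarrow> m2 a k = m2' a k"
  shows "jL1 K m1 m2 = jL1 K m1' m2'"
  unfolding jL1_def using assms by (intro sum.cong refl) auto

lemma sum_agents_1: "(\<Sum>k\<in>{1..K}. \<Sum>j\<in>{1..N k}. (1::real)) = real (Npop K N)"
  by (simp add: Npop_card)

lemma fin_act: "finite (set_pmf (act_law K N pl t (xs :: nat \<times> nat \<Rightarrow> 'x::finite) :: (nat \<times> nat \<Rightarrow> 'u::finite) pmf))"
  unfolding act_law_def by (rule fin_Pi[OF agents_finite])

lemma fin_next: "finite (set_pmf (next_law K N P (xs :: nat \<times> nat \<Rightarrow> 'x::finite) (us :: nat \<times> nat \<Rightarrow> 'u::finite)))"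
  unfolding next_law_def by (rule fin_Pi[OF agents_finite])

lemma step_nu:
  fixes pl :: "nat \<Rightarrow> nat \<Rightarrow> 'x::finite \<Rightarrow> ('x \<Rightarrow> nat \<Rightarrow> real) \<Rightarrow> 'u::finite pmf"
  assumes N: "\<forall>k\<in>{1..K}. N k \<ge> 1"
  shows "EE (act_law K N pl t xs) (\<lambda>us. jL1 K (emp K N us) (nuMF (pl t) (emp K N xs)))
     \<le> sqrt (real CARD('u)) * (\<Sum>k\<in>{1..K}. 1 / sqrt (real (N k)))"
proof -
  define p where "p = (\<lambda>(k, j). pl t k (xs (k, j)) (emp K N xs))"
  define h where "h = (\<lambda>(i::nat\<times>nat) (a::'u) (y::'u). if y = a then (1::real) else 0)"
  have S: "EE (Pi_pmf (agents K N) undefined p)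
     (\<lambda>c. jL1 K (\<lambda>a k. (\<Sum>j\<in>{1..N k}. h (k,j) a (c (k,j))) / real (Npop K N))
                 (\<lambda>a k. (\<Sum>j\<in>{1..N k}. EE (p (k,j)) (h (k,j) a)) / real (Npop K N)))
     \<le> sqrt (real CARD('u)) * (\<Sum>k\<in>{1..K}. 1 / sqrt (real (N k)))"
    by (rule samp[OF N]) (auto simp: h_def)
  have "jL1 K (emp K N us) (nuMF (pl t) (emp K N xs)) =
        jL1 K (\<lambda>a k. (\<Sum>j\<in>{1..N k}. h (k,j) a (us (k,j))) / real (Npop K N))
                 (\<lambda>a k. (\<Sum>j\<in>{1..N k}. EE (p (k,j)) (h (k,j) a)) / real (Npop K N))" for us
  proof (rule jL1_cong)
    fix a k assume k: "k \<in> {1..K}"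
    show "emp K N us a k = (\<Sum>j\<in>{1..N k}. h (k,j) a (us (k,j))) / real (Npop K N)"
      using k by (simp add: emp_def h_def)
    have "nuMF (pl t) (emp K N xs) a k = (\<Sum>x\<in>UNIV. emp K N xs x k * pmf (pl t k x (emp K N xs)) a)"
      unfolding nuMF_def by (simp add: mult.commute)
    also have "\<dots> = (\<Sum>j\<in>{1..N k}. pmf (pl t k (xs (k,j)) (emp K N xs)) a) / real (Npop K N)"
      by (rule FIB[OF k])
    also have "\<dots> = (\<Sum>j\<in>{1..N k}. EE (p (k,j)) (h (k,j) a)) / real (Npop K N)"
      by (simp add: p_def h_def EE_ind)
    finally show "nuMF (pl t) (emp K N xs) a k = (\<Sum>j\<in>{1..N k}. EE (p (k,j)) (h (k,j) a)) / real (Npop K N)" .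
  qed
  hence "EE (act_law K N pl t xs) (\<lambda>us. jL1 K (emp K N us) (nuMF (pl t) (emp K N xs)))
     = EE (Pi_pmf (agents K N) undefined p)
     (\<lambda>c. jL1 K (\<lambda>a k. (\<Sum>j\<in>{1..N k}. h (k,j) a (c (k,j))) / real (Npop K N))
                 (\<lambda>a k. (\<Sum>j\<in>{1..N k}. EE (p (k,j)) (h (k,j) a)) / real (Npop K N)))"
    by (simp add: act_law_def p_def)
  with S show ?thesis by simp
qed

lemma step_next:
  fixes P :: "nat \<Rightarrow> 'x::finite \<Rightarrow> 'u::finite \<Rightarrow> ('x \<Rightarrow> nat \<Rightarrow> real) \<Rightarrow> ('u \<Rightarrow> nat \<Rightarrow> real) \<Rightarrow> 'x pmf"
  assumes N: "\<forall>k\<in>{1..K}. N k \<ge> 1"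
  shows "EE (next_law K N P xs us) (\<lambda>xs'. jL1 K (emp K N xs')
      (\<lambda>x' k. (\<Sum>j\<in>{1..N k}. pmf (P k (xs (k,j)) (us (k,j)) (emp K N xs) (emp K N us)) x') / real (Npop K N)))
     \<le> sqrt (real CARD('x)) * (\<Sum>k\<in>{1..K}. 1 / sqrt (real (N k)))"
proof -
  define p where "p = (\<lambda>(k, j). P k (xs (k, j)) (us (k, j)) (emp K N xs) (emp K N us))"
  define h where "h = (\<lambda>(i::nat\<times>nat) (a::'x) (y::'x). if y = a then (1::real) else 0)"
  have S: "EE (Pi_pmf (agents K N) undefined p)
     (\<lambda>c. jL1 K (\<lambda>a k. (\<Sum>j\<in>{1..N k}. h (k,j) a (c (k,j))) / real (Npop K N))
                 (\<lambda>a k. (\<Sum>j\<in>{1..N k}. EE (p (k,j)) (h (k,j) a)) / real (Npop K N)))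
     \<le> sqrt (real CARD('x)) * (\<Sum>k\<in>{1..K}. 1 / sqrt (real (N k)))"
    by (rule samp[OF N]) (auto simp: h_def)
  have "jL1 K (emp K N c) (\<lambda>x' k. (\<Sum>j\<in>{1..N k}. pmf (P k (xs (k,j)) (us (k,j)) (emp K N xs) (emp K N us)) x') / real (Npop K N)) =
        jL1 K (\<lambda>a k. (\<Sum>j\<in>{1..N k}. h (k,j) a (c (k,j))) / real (Npop K N))
                 (\<lambda>a k. (\<Sum>j\<in>{1..N k}. EE (p (k,j)) (h (k,j) a)) / real (Npop K N))" for c
  proof (rule jL1_cong)
    fix a k assume k: "k \<in> {1..K}"
    show "emp K N c a k = (\<Sum>j\<in>{1..N k}. h (k,j) a (c (k,j))) / real (Npop K N)"
      using k by (simp add: emp_def h_def)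
    show "(\<Sum>j\<in>{1..N k}. pmf (P k (xs (k,j)) (us (k,j)) (emp K N xs) (emp K N us)) a) / real (Npop K N)
       = (\<Sum>j\<in>{1..N k}. EE (p (k,j)) (h (k,j) a)) / real (Npop K N)"
      by (simp add: p_def h_def EE_ind)
  qed
  hence "EE (next_law K N P xs us) (\<lambda>xs'. jL1 K (emp K N xs')
      (\<lambda>x' k. (\<Sum>j\<in>{1..N k}. pmf (P k (xs (k,j)) (us (k,j)) (emp K N xs) (emp K N us)) x') / real (Npop K N)))
     = EE (Pi_pmf (agents K N) undefined p)
     (\<lambda>c. jL1 K (\<lambda>a k. (\<Sum>j\<in>{1..N k}. h (k,j) a (c (k,j))) / real (Npop K N))
                 (\<lambda>a k. (\<Sum>j\<in>{1..N k}. EE (p (k,j)) (h (k,j) a)) / real (Npop K N)))"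
    by (simp add: next_law_def p_def)
  with S show ?thesis by simp
qed

lemma step_q:
  fixes P :: "nat \<Rightarrow> 'x::finite \<Rightarrow> 'u::finite \<Rightarrow> ('x \<Rightarrow> nat \<Rightarrow> real) \<Rightarrow> ('u \<Rightarrow> nat \<Rightarrow> real) \<Rightarrow> 'x pmf"
  assumes Np: "Npop K N > 0"
    and Plip: "\<forall>k\<in>{1..K}. \<forall>x u mu1 nu1 mu2 nu2.
                  is_jdist K mu1 \<longrightarrow> is_jdist K nu1 \<longrightarrow> is_jdist K mu2 \<longrightarrow> is_jdist K nu2 \<longrightarrow>
                  pL1 (P k x u mu1 nu1) (P k x u mu2 nu2) \<le> LP * (jL1 K mu1 mu2 + jL1 K nu1 nu2)"
    and jm: "is_jdist K mu" and j1: "is_jdist K nu1" and j2: "is_jdist K nu2"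
  shows "jL1 K (\<lambda>x' k. (\<Sum>j\<in>{1..N k}. pmf (P k (xs (k,j)) (us (k,j)) mu nu1) x') / real (Npop K N))
               (\<lambda>x' k. (\<Sum>j\<in>{1..N k}. pmf (P k (xs (k,j)) (us (k,j)) mu nu2) x') / real (Npop K N))
         \<le> LP * jL1 K nu1 nu2"
proof -
  let ?Q1 = "\<lambda>k j x'. pmf (P k (xs (k,j)) (us (k,j)) mu nu1) x'" and ?Q2 = "\<lambda>k j x'. pmf (P k (xs (k,j)) (us (k,j)) mu nu2) x'"
  have Np0: "real (Npop K N) \<ge> 0" by simp
  have "jL1 K (\<lambda>x' k. (\<Sum>j\<in>{1..N k}. ?Q1 k j x') / real (Npop K N)) (\<lambda>x' k. (\<Sum>j\<in>{1..N k}. ?Q2 k j x') / real (Npop K N))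
      = (\<Sum>k\<in>{1..K}. (\<Sum>x'\<in>UNIV. \<bar>\<Sum>j\<in>{1..N k}. ?Q1 k j x' - ?Q2 k j x'\<bar>) / real (Npop K N))"
    unfolding jL1_def using jL1_div[OF Np0, where F="\<lambda>x' k j. ?Q1 k j x'" and G="\<lambda>x' k j. ?Q2 k j x'"] by simp
  also have "\<dots> \<le> (\<Sum>k\<in>{1..K}. (real (N k) * (LP * jL1 K nu1 nu2)) / real (Npop K N))"
  proof (intro sum_mono divide_right_mono Np0)
    fix k assume k: "k \<in> {1..K}"
    have "(\<Sum>x'\<in>UNIV. \<bar>\<Sum>j\<in>{1..N k}. ?Q1 k j x' - ?Q2 k j x'\<bar>) \<le> (\<Sum>x'\<in>UNIV. \<Sum>j\<in>{1..N k}. \<bar>?Q1 k j x' - ?Q2 k j x'\<bar>)"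
      by (intro sum_mono sum_abs)
    also have "\<dots> = (\<Sum>j\<in>{1..N k}. pL1 (P k (xs (k,j)) (us (k,j)) mu nu1) (P k (xs (k,j)) (us (k,j)) mu nu2))"
      unfolding pL1_def by (rule sum.swap)
    also have "\<dots> \<le> (\<Sum>j\<in>{1..N k}. LP * jL1 K nu1 nu2)"
    proof (rule sum_mono)
      fix j
      have "pL1 (P k (xs (k,j)) (us (k,j)) mu nu1) (P k (xs (k,j)) (us (k,j)) mu nu2) \<le> LP * (jL1 K mu mu + jL1 K nu1 nu2)"
        using Plip k jm j1 j2 by blast
      thus "pL1 (P k (xs (k,j)) (us (k,j)) mu nu1) (P k (xs (k,j)) (us (k,j)) mu nu2) \<le> LP * jL1 K nu1 nu2" by simp
    qed
    also have "\<dots> = real (N k) * (LP * jL1 K nu1 nu2)" by simp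
    finally show "(\<Sum>x'\<in>UNIV. \<bar>\<Sum>j\<in>{1..N k}. ?Q1 k j x' - ?Q2 k j x'\<bar>) \<le> real (N k) * (LP * jL1 K nu1 nu2)" .
  qed
  also have "\<dots> = (\<Sum>k\<in>{1..K}. real (N k)) * (LP * jL1 K nu1 nu2) / real (Npop K N)"
    by (simp only: sum_divide_distrib[symmetric] sum_distrib_right[symmetric])
  also have "\<dots> = LP * jL1 K nu1 nu2"
    using Np unfolding Npop_card[symmetric] by simp
  finally show ?thesis .
qed

lemma step_q2:
  fixes P :: "nat \<Rightarrow> 'x::finite \<Rightarrow> 'u::finite \<Rightarrow> ('x \<Rightarrow> nat \<Rightarrow> real) \<Rightarrow> ('u \<Rightarrow> nat \<Rightarrow> real) \<Rightarrow> 'x pmf"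
    and pl :: "nat \<Rightarrow> nat \<Rightarrow> 'x \<Rightarrow> ('x \<Rightarrow> nat \<Rightarrow> real) \<Rightarrow> 'u pmf"
  assumes N: "\<forall>k\<in>{1..K}. N k \<ge> 1"
  shows "EE (act_law K N pl t xs) (\<lambda>us. jL1 K
      (\<lambda>x' k. (\<Sum>j\<in>{1..N k}. pmf (P k (xs (k,j)) (us (k,j)) (emp K N xs) (nuMF (pl t) (emp K N xs))) x') / real (Npop K N))
      (PMF P (pl t) (emp K N xs)))
     \<le> sqrt (real CARD('x)) * (\<Sum>k\<in>{1..K}. 1 / sqrt (real (N k)))"
proof -
  define mu where "mu = emp K N xs"
  define p where "p = (\<lambda>(k, j). pl t k (xs (k, j)) mu)"
  define h where "h = (\<lambda>(i::nat\<times>nat) (a::'x) (y::'u). pmf (P (fst i) (xs i) y mu (nuMF (pl t) mu)) a)"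
  have S: "EE (Pi_pmf (agents K N) undefined p)
     (\<lambda>c. jL1 K (\<lambda>a k. (\<Sum>j\<in>{1..N k}. h (k,j) a (c (k,j))) / real (Npop K N))
                 (\<lambda>a k. (\<Sum>j\<in>{1..N k}. EE (p (k,j)) (h (k,j) a)) / real (Npop K N)))
     \<le> sqrt (real CARD('x)) * (\<Sum>k\<in>{1..K}. 1 / sqrt (real (N k)))"
    by (rule samp[OF N]) (auto simp: h_def)
  have "jL1 K (\<lambda>x' k. (\<Sum>j\<in>{1..N k}. pmf (P k (xs (k,j)) (c (k,j)) mu (nuMF (pl t) mu)) x') / real (Npop K N))
      (PMF P (pl t) mu) =
        jL1 K (\<lambda>a k. (\<Sum>j\<in>{1..N k}. h (k,j) a (c (k,j))) / real (Npop K N))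
                 (\<lambda>a k. (\<Sum>j\<in>{1..N k}. EE (p (k,j)) (h (k,j) a)) / real (Npop K N))" for c
  proof (rule jL1_cong)
    fix a k assume k: "k \<in> {1..K}"
    show "(\<Sum>j\<in>{1..N k}. pmf (P k (xs (k,j)) (c (k,j)) mu (nuMF (pl t) mu)) a) / real (Npop K N)
        = (\<Sum>j\<in>{1..N k}. h (k,j) a (c (k,j))) / real (Npop K N)"
      by (simp add: h_def)
    have "PMF P (pl t) mu a k = (\<Sum>x\<in>UNIV. mu x k * (\<Sum>u\<in>UNIV. pmf (pl t k x mu) u * pmf (P k x u mu (nuMF (pl t) mu)) a))"
      unfolding PMF_def by (simp add: sum_distrib_left mult.assoc)
    also have "\<dots> = (\<Sum>j\<in>{1..N k}. (\<Sum>u\<in>UNIV. pmf (pl t k (xs (k,j)) mu) u * pmf (P k (xs (k,j)) u mu (nuMF (pl t) mu)) a)) / real (Npop K N)"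
      unfolding mu_def by (rule FIB[OF k])
    also have "\<dots> = (\<Sum>j\<in>{1..N k}. EE (p (k,j)) (h (k,j) a)) / real (Npop K N)"
      by (intro arg_cong2[where f="(/)"] sum.cong refl)
         (simp add: p_def h_def EE_fin[of UNIV] mult.commute)
    finally show "PMF P (pl t) mu a k = (\<Sum>j\<in>{1..N k}. EE (p (k,j)) (h (k,j) a)) / real (Npop K N)" .
  qed
  hence "EE (act_law K N pl t xs) (\<lambda>us. jL1 K
      (\<lambda>x' k. (\<Sum>j\<in>{1..N k}. pmf (P k (xs (k,j)) (us (k,j)) mu (nuMF (pl t) mu)) x') / real (Npop K N))
      (PMF P (pl t) mu))
     = EE (Pi_pmf (agents K N) undefined p)
     (\<lambda>c. jL1 K (\<lambda>a k. (\<Sum>j\<in>{1..N k}. h (k,j) a (c (k,j))) / real (Npop K N))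
                 (\<lambda>a k. (\<Sum>j\<in>{1..N k}. EE (p (k,j)) (h (k,j) a)) / real (Npop K N)))"
    by (simp add: act_law_def p_def mu_def)
  with S show ?thesis unfolding mu_def by simp
qed

lemma jL1_tri3: "jL1 K a d \<le> jL1 K a b + (jL1 K b c + jL1 K c d)"
  using jL1_tri[of K a d b] jL1_tri[of K b d c] by linarith

lemma one_step:
  fixes P :: "nat \<Rightarrow> 'x::finite \<Rightarrow> 'u::finite \<Rightarrow> ('x \<Rightarrow> nat \<Rightarrow> real) \<Rightarrow> ('u \<Rightarrow> nat \<Rightarrow> real) \<Rightarrow> 'x pmf"
    and pl :: "nat \<Rightarrow> nat \<Rightarrow> 'x \<Rightarrow> ('x \<Rightarrow> nat \<Rightarrow> real) \<Rightarrow> 'u pmf"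
  assumes N: "\<forall>k\<in>{1..K}. N k \<ge> 1" and Np: "Npop K N > 0"
    and Plip: "\<forall>k\<in>{1..K}. \<forall>x u mu1 nu1 mu2 nu2.
                  is_jdist K mu1 \<longrightarrow> is_jdist K nu1 \<longrightarrow> is_jdist K mu2 \<longrightarrow> is_jdist K nu2 \<longrightarrow>
                  pL1 (P k x u mu1 nu1) (P k x u mu2 nu2) \<le> LP * (jL1 K mu1 mu2 + jL1 K nu1 nu2)"
    and LP: "LP \<ge> 0"
  shows "EE (act_law K N pl t xs \<bind> (\<lambda>us. next_law K N P xs us)) (\<lambda>xs'. jL1 K (emp K N xs') (PMF P (pl t) (emp K N xs)))
     \<le> (2 * sqrt (real CARD('x)) + LP * sqrt (real CARD('u))) * (\<Sum>k\<in>{1..K}. 1 / sqrt (real (N k)))"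
proof -
  define sN where "sN = (\<Sum>k\<in>{1..K}. 1 / sqrt (real (N k)))"
  define mu where "mu = emp K N xs"
  define nuM where "nuM = nuMF (pl t) mu"
  define q where "q = (\<lambda>us x' k. (\<Sum>j\<in>{1..N k}. pmf (P k (xs (k,j)) (us (k,j)) mu (emp K N us)) x') / real (Npop K N))"
  define q' where "q' = (\<lambda>us x' k. (\<Sum>j\<in>{1..N k}. pmf (P k (xs (k,j)) (us (k,j)) mu nuM) x') / real (Npop K N))"
  have jmu: "is_jdist K mu" unfolding mu_def by (rule emp_jdist[OF Np])
  have jnuM: "is_jdist K nuM" unfolding nuM_def by (rule nuMF_jdist[OF jmu])
  have finA: "finite (set_pmf (act_law K N pl t xs))" by (rule fin_act)
  have inner: "EE (next_law K N P xs us) (\<lambda>xs'. jL1 K (emp K N xs') (PMF P (pl t) mu))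
      \<le> sqrt (real CARD('x)) * sN + LP * jL1 K (emp K N us) nuM + jL1 K (q' us) (PMF P (pl t) mu)" for us
  proof -
    have finN: "finite (set_pmf (next_law K N P xs us))" by (rule fin_next)
    have "EE (next_law K N P xs us) (\<lambda>xs'. jL1 K (emp K N xs') (PMF P (pl t) mu))
       \<le> EE (next_law K N P xs us) (\<lambda>xs'. jL1 K (emp K N xs') (q us) + (jL1 K (q us) (q' us) + jL1 K (q' us) (PMF P (pl t) mu)))"
      by (intro integral_mono EE_int[OF finN] jL1_tri3)
    also have "\<dots> = EE (next_law K N P xs us) (\<lambda>xs'. jL1 K (emp K N xs') (q us)) + (jL1 K (q us) (q' us) + jL1 K (q' us) (PMF P (pl t) mu))"
      using finN by (simp add: EE_int)
    also have "\<dots> \<le> sqrt (real CARD('x)) * sN + (LP * jL1 K (emp K N us) nuM + jL1 K (q' us) (PMF P (pl t) mu))"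
    proof (intro add_mono order_refl)
      show "EE (next_law K N P xs us) (\<lambda>xs'. jL1 K (emp K N xs') (q us)) \<le> sqrt (real CARD('x)) * sN"
        using step_next[OF N, where P=P and xs=xs and us=us] unfolding q_def sN_def mu_def by simp
      show "jL1 K (q us) (q' us) \<le> LP * jL1 K (emp K N us) nuM"
        unfolding q_def q'_def by (rule step_q[OF Np Plip jmu emp_jdist[OF Np] jnuM])
    qed
    finally show ?thesis by simp
  qed
  have "EE (act_law K N pl t xs \<bind> (\<lambda>us. next_law K N P xs us)) (\<lambda>xs'. jL1 K (emp K N xs') (PMF P (pl t) mu))
      = EE (act_law K N pl t xs) (\<lambda>us. EE (next_law K N P xs us) (\<lambda>xs'. jL1 K (emp K N xs') (PMF P (pl t) mu)))"
    by (rule EE_bind[OF finA fin_next])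
  also have "\<dots> \<le> EE (act_law K N pl t xs) (\<lambda>us. sqrt (real CARD('x)) * sN + LP * jL1 K (emp K N us) nuM + jL1 K (q' us) (PMF P (pl t) mu))"
    by (intro integral_mono EE_int[OF finA] inner)
  also have "\<dots> = sqrt (real CARD('x)) * sN + LP * EE (act_law K N pl t xs) (\<lambda>us. jL1 K (emp K N us) nuM)
       + EE (act_law K N pl t xs) (\<lambda>us. jL1 K (q' us) (PMF P (pl t) mu))"
    using finA by (simp add: EE_int)
  also have "\<dots> \<le> sqrt (real CARD('x)) * sN + LP * (sqrt (real CARD('u)) * sN) + sqrt (real CARD('x)) * sN"
  proof (intro add_mono order_refl mult_left_mono LP)
    show "EE (act_law K N pl t xs) (\<lambda>us. jL1 K (emp K N us) nuM) \<le> sqrt (real CARD('u)) * sN"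
      using step_nu[OF N, where pl=pl and t=t and xs=xs] unfolding sN_def nuM_def mu_def by simp
    show "EE (act_law K N pl t xs) (\<lambda>us. jL1 K (q' us) (PMF P (pl t) mu)) \<le> sqrt (real CARD('x)) * sN"
      using step_q2[OF N, where P=P and pl=pl and t=t and xs=xs] unfolding sN_def q'_def nuM_def mu_def by simp
  qed
  finally show ?thesis unfolding sN_def mu_def by (simp add: algebra_simps)
qed

lemma EE_abs_le: "\<bar>EE M f\<bar> \<le> EE M (\<lambda>x. \<bar>f x\<bar>)"
  using integral_norm_bound[of M f] by simp

lemma card_agents: "card (agents K N) = Npop K N"
proof -
  have "agents K N = Sigma {1..K} (\<lambda>k. {1..N k})" by (auto simp: agents_def)
  thus ?thesis by (simp add: Npop_def)
qed

lemma rew_step: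
  fixes r :: "nat \<Rightarrow> 'x::finite \<Rightarrow> 'u::finite \<Rightarrow> ('x \<Rightarrow> nat \<Rightarrow> real) \<Rightarrow> ('u \<Rightarrow> nat \<Rightarrow> real) \<Rightarrow> real"
    and pl :: "nat \<Rightarrow> nat \<Rightarrow> 'x \<Rightarrow> ('x \<Rightarrow> nat \<Rightarrow> real) \<Rightarrow> 'u pmf"
  assumes N: "\<forall>k\<in>{1..K}. N k \<ge> 1" and Np: "Npop K N > 0"
    and r_lip: "\<forall>k\<in>{1..K}. \<forall>x u mu1 nu1 mu2 nu2.
                  is_jdist K mu1 \<longrightarrow> is_jdist K nu1 \<longrightarrow> is_jdist K mu2 \<longrightarrow> is_jdist K nu2 \<longrightarrow>
                  \<bar>r k x u mu1 nu1 - r k x u mu2 nu2\<bar> \<le> LR * (jL1 K mu1 mu2 + jL1 K nu1 nu2)"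
    and LR: "LR \<ge> 0"
  shows "\<bar>EE (act_law K N pl t xs) (\<lambda>us. 1 / real (Npop K N) * (\<Sum>i\<in>agents K N. r (fst i) (xs i) (us i) (emp K N xs) (emp K N us)))
          - (\<Sum>k\<in>{1..K}. rMF r (pl t) (emp K N xs) k)\<bar>
     \<le> LR * (sqrt (real CARD('u)) * (\<Sum>k\<in>{1..K}. 1 / sqrt (real (N k))))"
proof -
  define mu where "mu = emp K N xs"
  define nuM where "nuM = nuMF (pl t) mu"
  define Np where "Np = real (Npop K N)"
  define R where "R = (\<lambda>us. 1 / Np * (\<Sum>i\<in>agents K N. r (fst i) (xs i) (us i) mu (emp K N us)))"
  define R' where "R' = (\<lambda>us. 1 / Np * (\<Sum>i\<in>agents K N. r (fst i) (xs i) (us i) mu nuM))"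
  have Np0: "Np > 0" using Np by (simp add: Np_def)
  have jmu: "is_jdist K mu" unfolding mu_def by (rule emp_jdist[OF Np])
  have jnuM: "is_jdist K nuM" unfolding nuM_def by (rule nuMF_jdist[OF jmu])
  have finA: "finite (set_pmf (act_law K N pl t xs))" by (rule fin_act)
  have diff: "\<bar>R us - R' us\<bar> \<le> LR * jL1 K (emp K N us) nuM" for us
  proof -
    have "\<bar>R us - R' us\<bar> = 1 / Np * \<bar>\<Sum>i\<in>agents K N. r (fst i) (xs i) (us i) mu (emp K N us) - r (fst i) (xs i) (us i) mu nuM\<bar>"
      using Np0 by (simp add: R_def R'_def sum_subtractf diff_divide_distrib[symmetric] abs_divide)
    also have "\<dots> \<le> 1 / Np * (\<Sum>i\<in>agents K N. LR * jL1 K (emp K N us) nuM)"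
    proof (intro mult_left_mono order_trans[OF sum_abs] sum_mono)
      fix i assume i: "i \<in> agents K N"
      hence "fst i \<in> {1..K}" by (auto simp: agents_def)
      hence "\<bar>r (fst i) (xs i) (us i) mu (emp K N us) - r (fst i) (xs i) (us i) mu nuM\<bar> \<le> LR * (jL1 K mu mu + jL1 K (emp K N us) nuM)"
        using r_lip jmu jnuM emp_jdist[OF Np] by blast
      thus "\<bar>r (fst i) (xs i) (us i) mu (emp K N us) - r (fst i) (xs i) (us i) mu nuM\<bar> \<le> LR * jL1 K (emp K N us) nuM" by simp
    qed (use Np0 in simp)
    also have "\<dots> = LR * jL1 K (emp K N us) nuM"
      using Np0 by (simp add: card_agents Np_def)
    finally show ?thesis .
  qed
  have ER': "EE (act_law K N pl t xs) R' = (\<Sum>k\<in>{1..K}. rMF r (pl t) mu k)"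
  proof -
    have "EE (act_law K N pl t xs) R' = 1 / Np * (\<Sum>i\<in>agents K N. EE (act_law K N pl t xs) (\<lambda>us. r (fst i) (xs i) (us i) mu nuM))"
      using finA by (simp add: R'_def EE_int)
    also have "\<dots> = 1 / Np * (\<Sum>i\<in>agents K N. EE (pl t (fst i) (xs i) mu) (\<lambda>u. r (fst i) (xs i) u mu nuM))"
    proof (intro arg_cong2[where f="(*)"] refl sum.cong)
      fix i assume i: "i \<in> agents K N"
      show "EE (act_law K N pl t xs) (\<lambda>us. r (fst i) (xs i) (us i) mu nuM) = EE (pl t (fst i) (xs i) mu) (\<lambda>u. r (fst i) (xs i) u mu nuM)"
        unfolding act_law_def using EE_Pi_comp[OF agents_finite i, where f="\<lambda>u. r (fst i) (xs i) u mu nuM"]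
        by (simp add: case_prod_unfold mu_def)
    qed
    also have "\<dots> = (\<Sum>k\<in>{1..K}. (\<Sum>j\<in>{1..N k}. EE (pl t k (xs (k,j)) mu) (\<lambda>u. r k (xs (k,j)) u mu nuM)) / Np)"
      by (simp add: sum_agents sum_divide_distrib)
    also have "\<dots> = (\<Sum>k\<in>{1..K}. rMF r (pl t) mu k)"
    proof (rule sum.cong[OF refl])
      fix k assume k: "k \<in> {1..K}"
      have "rMF r (pl t) mu k = (\<Sum>x\<in>UNIV. mu x k * EE (pl t k x mu) (\<lambda>u. r k x u mu nuM))"
        unfolding rMF_def nuM_def by (simp add: EE_fin[of UNIV] sum_distrib_left mult.assoc mult.commute mult.left_commute)
      also have "\<dots> = (\<Sum>j\<in>{1..N k}. EE (pl t k (xs (k,j)) mu) (\<lambda>u. r k (xs (k,j)) u mu nuM)) / Np"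
        unfolding mu_def Np_def by (rule FIB[OF k])
      finally show "(\<Sum>j\<in>{1..N k}. EE (pl t k (xs (k,j)) mu) (\<lambda>u. r k (xs (k,j)) u mu nuM)) / Np = rMF r (pl t) mu k" by simp
    qed
    finally show ?thesis .
  qed
  have "\<bar>EE (act_law K N pl t xs) R - EE (act_law K N pl t xs) R'\<bar> = \<bar>EE (act_law K N pl t xs) (\<lambda>us. R us - R' us)\<bar>"
    using finA by (simp add: EE_int)
  also have "\<dots> \<le> EE (act_law K N pl t xs) (\<lambda>us. \<bar>R us - R' us\<bar>)" by (rule EE_abs_le)
  also have "\<dots> \<le> EE (act_law K N pl t xs) (\<lambda>us. LR * jL1 K (emp K N us) nuM)"
    by (intro integral_mono EE_int[OF finA] diff)
  also have "\<dots> = LR * EE (act_law K N pl t xs) (\<lambda>us. jL1 K (emp K N us) nuM)" by simp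
  also have "\<dots> \<le> LR * (sqrt (real CARD('u)) * (\<Sum>k\<in>{1..K}. 1 / sqrt (real (N k))))"
    using step_nu[OF N, where pl=pl and t=t and xs=xs] LR unfolding nuM_def mu_def by (intro mult_left_mono) auto
  finally show ?thesis using ER' unfolding R_def mu_def Np_def by simp
qed

lemma fin_state:
  "finite (set_pmf (state_law K N (P :: nat \<Rightarrow> 'x::finite \<Rightarrow> 'u::finite \<Rightarrow> ('x \<Rightarrow> nat \<Rightarrow> real) \<Rightarrow> ('u \<Rightarrow> nat \<Rightarrow> real) \<Rightarrow> 'x pmf) pl x0 t))"
proof (induction t)
  case 0 then show ?case by simp
next
  case (Suc t)
  then show ?case by (auto simp: fin_act fin_next)
qed

lemma e_step:
  fixes P :: "nat \<Rightarrow> 'x::finite \<Rightarrow> 'u::finite \<Rightarrow> ('x \<Rightarrow> nat \<Rightarrow> real) \<Rightarrow> ('u \<Rightarrow> nat \<Rightarrow> real) \<Rightarrow> 'x pmf"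
    and pl :: "nat \<Rightarrow> nat \<Rightarrow> 'x \<Rightarrow> ('x \<Rightarrow> nat \<Rightarrow> real) \<Rightarrow> 'u pmf"
  assumes N: "\<forall>k\<in>{1..K}. N k \<ge> 1" and Np: "Npop K N > 0"
    and Plip: "\<forall>k\<in>{1..K}. \<forall>x u mu1 nu1 mu2 nu2.
                  is_jdist K mu1 \<longrightarrow> is_jdist K nu1 \<longrightarrow> is_jdist K mu2 \<longrightarrow> is_jdist K nu2 \<longrightarrow>
                  pL1 (P k x u mu1 nu1) (P k x u mu2 nu2) \<le> LP * (jL1 K mu1 mu2 + jL1 K nu1 nu2)"
    and LP: "LP \<ge> 0"
    and pol: "policy_class K LQ pl"
    and jm: "is_jdist K m"
  shows "EE (state_law K N P pl x0 (Suc t)) (\<lambda>xs. jL1 K (emp K N xs) (PMF P (pl t) m))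
     \<le> (2 * sqrt (real CARD('x)) + LP * sqrt (real CARD('u))) * (\<Sum>k\<in>{1..K}. 1 / sqrt (real (N k)))
       + (1 + LQ + LP * (2 + LQ)) * EE (state_law K N P pl x0 t) (\<lambda>xs. jL1 K (emp K N xs) m)"
proof -
  define C1 where "C1 = (2 * sqrt (real CARD('x)) + LP * sqrt (real CARD('u))) * (\<Sum>k\<in>{1..K}. 1 / sqrt (real (N k)))"
  define S where "S = 1 + LQ + LP * (2 + LQ)"
  define D where "D = state_law K N P pl x0 t"
  have finD: "finite (set_pmf D)" unfolding D_def by (rule fin_state)
  have finB: "finite (set_pmf (act_law K N pl t xs \<bind> (\<lambda>us. next_law K N P xs us)))" for xs
    by (auto simp: fin_act fin_next)
  have inner: "EE (act_law K N pl t xs \<bind> (\<lambda>us. next_law K N P xs us)) (\<lambda>xs'. jL1 K (emp K N xs') (PMF P (pl t) m))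
      \<le> C1 + S * jL1 K (emp K N xs) m" for xs
  proof -
    have "EE (act_law K N pl t xs \<bind> (\<lambda>us. next_law K N P xs us)) (\<lambda>xs'. jL1 K (emp K N xs') (PMF P (pl t) m))
      \<le> EE (act_law K N pl t xs \<bind> (\<lambda>us. next_law K N P xs us)) (\<lambda>xs'. jL1 K (emp K N xs') (PMF P (pl t) (emp K N xs)) + jL1 K (PMF P (pl t) (emp K N xs)) (PMF P (pl t) m))"
      by (intro integral_mono EE_int[OF finB] jL1_tri)
    also have "\<dots> = EE (act_law K N pl t xs \<bind> (\<lambda>us. next_law K N P xs us)) (\<lambda>xs'. jL1 K (emp K N xs') (PMF P (pl t) (emp K N xs))) + jL1 K (PMF P (pl t) (emp K N xs)) (PMF P (pl t) m)"
      using finB[of xs] by (simp add: EE_int)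
    also have "\<dots> \<le> C1 + S * jL1 K (emp K N xs) m"
    proof (rule add_mono)
      show "EE (act_law K N pl t xs \<bind> (\<lambda>us. next_law K N P xs us)) (\<lambda>xs'. jL1 K (emp K N xs') (PMF P (pl t) (emp K N xs))) \<le> C1"
        unfolding C1_def by (rule one_step[OF N Np Plip LP])
      have je: "is_jdist K (emp K N xs)" by (rule emp_jdist[OF Np])
      show "jL1 K (PMF P (pl t) (emp K N xs)) (PMF P (pl t) m) \<le> S * jL1 K (emp K N xs) m"
        unfolding S_def
      proof (rule lip_PMF[OF je jm _ Plip LP])
        fix k x assume "k \<in> {1..K}"
        thus "pL1 (pl t k x (emp K N xs)) (pl t k x m) \<le> LQ * jL1 K (emp K N xs) m"
          using pol je jm unfolding policy_class_def by blast
      qed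
    qed
    finally show ?thesis .
  qed
  have "EE (state_law K N P pl x0 (Suc t)) (\<lambda>xs. jL1 K (emp K N xs) (PMF P (pl t) m))
      = EE D (\<lambda>xs. EE (act_law K N pl t xs \<bind> (\<lambda>us. next_law K N P xs us)) (\<lambda>xs'. jL1 K (emp K N xs') (PMF P (pl t) m)))"
    unfolding D_def state_law.simps by (rule EE_bind[OF fin_state finB])
  also have "\<dots> \<le> EE D (\<lambda>xs. C1 + S * jL1 K (emp K N xs) m)"
    by (intro integral_mono EE_int[OF finD] inner)
  also have "\<dots> = C1 + S * EE D (\<lambda>xs. jL1 K (emp K N xs) m)"
    using finD by (simp add: EE_int)
  finally show ?thesis unfolding C1_def S_def D_def .
qed

lemma EE_return: "EE (return_pmf a) f = f a"
  by (subst EE_fin[of "{a}"]) auto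

lemma e_bound:
  fixes P :: "nat \<Rightarrow> 'x::finite \<Rightarrow> 'u::finite \<Rightarrow> ('x \<Rightarrow> nat \<Rightarrow> real) \<Rightarrow> ('u \<Rightarrow> nat \<Rightarrow> real) \<Rightarrow> 'x pmf"
    and pl :: "nat \<Rightarrow> nat \<Rightarrow> 'x \<Rightarrow> ('x \<Rightarrow> nat \<Rightarrow> real) \<Rightarrow> 'u pmf"
  assumes N: "\<forall>k\<in>{1..K}. N k \<ge> 1" and Np: "Npop K N > 0"
    and Plip: "\<forall>k\<in>{1..K}. \<forall>x u mu1 nu1 mu2 nu2.
                  is_jdist K mu1 \<longrightarrow> is_jdist K nu1 \<longrightarrow> is_jdist K mu2 \<longrightarrow> is_jdist K nu2 \<longrightarrow>
                  pL1 (P k x u mu1 nu1) (P k x u mu2 nu2) \<le> LP * (jL1 K mu1 mu2 + jL1 K nu1 nu2)"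
    and LP: "LP \<ge> 0"
    and pol: "policy_class K LQ pl"
    and C: "(2 * sqrt (real CARD('x)) + LP * sqrt (real CARD('u))) * (\<Sum>k\<in>{1..K}. 1 / sqrt (real (N k))) \<le> C"
    and SP: "1 + LQ + LP * (2 + LQ) \<le> SP" "SP > 1"
  shows "EE (state_law K N P pl x0 t) (\<lambda>xs. jL1 K (emp K N xs) (mf_traj P pl (emp K N x0) t))
      \<le> C * (SP ^ t - 1) / (SP - 1)"
proof (induction t)
  case 0
  show ?case by (simp add: EE_return)
next
  case (Suc t)
  define e where "e = EE (state_law K N P pl x0 t) (\<lambda>xs. jL1 K (emp K N xs) (mf_traj P pl (emp K N x0) t))"
  have jm: "is_jdist K (mf_traj P pl (emp K N x0) t)" by (rule mf_traj_jdist[OF emp_jdist[OF Np]])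
  have e0: "e \<ge> 0" unfolding e_def by (intro integral_nonneg_AE) (auto simp: jL1_nonneg)
  have "EE (state_law K N P pl x0 (Suc t)) (\<lambda>xs. jL1 K (emp K N xs) (mf_traj P pl (emp K N x0) (Suc t)))
      \<le> (2 * sqrt (real CARD('x)) + LP * sqrt (real CARD('u))) * (\<Sum>k\<in>{1..K}. 1 / sqrt (real (N k)))
       + (1 + LQ + LP * (2 + LQ)) * e"
    unfolding e_def mf_traj.simps by (rule e_step[OF N Np Plip LP pol jm])
  also have "\<dots> \<le> C + SP * e"
    using C SP e0 by (intro add_mono mult_right_mono) auto
  also have "\<dots> \<le> C + SP * (C * (SP ^ t - 1) / (SP - 1))"
    using Suc SP by (intro add_left_mono mult_left_mono) (auto simp: e_def)
  also have "\<dots> = C * (SP ^ Suc t - 1) / (SP - 1)"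
    using SP by (simp add: field_simps)
  finally show ?case .
qed

lemma ab_bound:
  fixes r :: "nat \<Rightarrow> 'x::finite \<Rightarrow> 'u::finite \<Rightarrow> ('x \<Rightarrow> nat \<Rightarrow> real) \<Rightarrow> ('u \<Rightarrow> nat \<Rightarrow> real) \<Rightarrow> real"
    and P :: "nat \<Rightarrow> 'x \<Rightarrow> 'u \<Rightarrow> ('x \<Rightarrow> nat \<Rightarrow> real) \<Rightarrow> ('u \<Rightarrow> nat \<Rightarrow> real) \<Rightarrow> 'x pmf"
    and pl :: "nat \<Rightarrow> nat \<Rightarrow> 'x \<Rightarrow> ('x \<Rightarrow> nat \<Rightarrow> real) \<Rightarrow> 'u pmf"
  assumes N: "\<forall>k\<in>{1..K}. N k \<ge> 1" and Np: "Npop K N > 0"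
    and r_bound: "\<forall>k\<in>{1..K}. \<forall>x u mu nu. is_jdist K mu \<longrightarrow> is_jdist K nu \<longrightarrow>
                    \<bar>r k x u mu nu\<bar> \<le> MR"
    and r_lip: "\<forall>k\<in>{1..K}. \<forall>x u mu1 nu1 mu2 nu2.
                  is_jdist K mu1 \<longrightarrow> is_jdist K nu1 \<longrightarrow> is_jdist K mu2 \<longrightarrow> is_jdist K nu2 \<longrightarrow>
                  \<bar>r k x u mu1 nu1 - r k x u mu2 nu2\<bar> \<le> LR * (jL1 K mu1 mu2 + jL1 K nu1 nu2)"
    and MR: "MR \<ge> 0" and LR: "LR \<ge> 0"
    and pol: "policy_class K LQ pl"
    and jm: "is_jdist K m"
  shows "\<bar>EE (sa_law K N P pl x0 t) (\<lambda>(xs, us). 1 / real (Npop K N) * (\<Sum>i\<in>agents K N. r (fst i) (xs i) (us i) (emp K N xs) (emp K N us)))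
          - (\<Sum>k\<in>{1..K}. rMF r (pl t) m k)\<bar>
     \<le> LR * (sqrt (real CARD('u)) * (\<Sum>k\<in>{1..K}. 1 / sqrt (real (N k))))
       + (MR * (1 + LQ) + LR * (2 + LQ)) * EE (state_law K N P pl x0 t) (\<lambda>xs. jL1 K (emp K N xs) m)"
proof -
  define D where "D = state_law K N P pl x0 t"
  define R where "R = (\<lambda>xs us. 1 / real (Npop K N) * (\<Sum>i\<in>agents K N. r (fst i) (xs i) (us i) (emp K N xs) (emp K N us)))"
  define B where "B = (\<lambda>mu. \<Sum>k\<in>{1..K}. rMF r (pl t) mu k)"
  define c1 where "c1 = LR * (sqrt (real CARD('u)) * (\<Sum>k\<in>{1..K}. 1 / sqrt (real (N k))))"
  define c2 where "c2 = MR * (1 + LQ) + LR * (2 + LQ)"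
  have finD: "finite (set_pmf D)" unfolding D_def by (rule fin_state)
  have finM: "finite (set_pmf (map_pmf (\<lambda>us. (xs, us)) (act_law K N pl t xs)))" for xs
    by (simp add: fin_act)
  have "EE (sa_law K N P pl x0 t) (\<lambda>(xs, us). R xs us) = EE D (\<lambda>xs. EE (map_pmf (\<lambda>us. (xs, us)) (act_law K N pl t xs)) (\<lambda>(xs, us). R xs us))"
    unfolding sa_law_def D_def by (rule EE_bind[OF fin_state finM])
  also have "\<dots> = EE D (\<lambda>xs. EE (act_law K N pl t xs) (R xs))" by simp
  finally have sa: "EE (sa_law K N P pl x0 t) (\<lambda>(xs, us). R xs us) = EE D (\<lambda>xs. EE (act_law K N pl t xs) (R xs))" .
  have pw: "\<bar>EE (act_law K N pl t xs) (R xs) - B m\<bar> \<le> c1 + c2 * jL1 K (emp K N xs) m" for xs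
  proof -
    have je: "is_jdist K (emp K N xs)" by (rule emp_jdist[OF Np])
    have "\<bar>EE (act_law K N pl t xs) (R xs) - B m\<bar> \<le> \<bar>EE (act_law K N pl t xs) (R xs) - B (emp K N xs)\<bar> + \<bar>B (emp K N xs) - B m\<bar>"
      by linarith
    also have "\<dots> \<le> c1 + c2 * jL1 K (emp K N xs) m"
    proof (rule add_mono)
      show "\<bar>EE (act_law K N pl t xs) (R xs) - B (emp K N xs)\<bar> \<le> c1"
        unfolding R_def B_def c1_def by (rule rew_step[OF N Np r_lip LR])
      show "\<bar>B (emp K N xs) - B m\<bar> \<le> c2 * jL1 K (emp K N xs) m"
        unfolding B_def c2_def
      proof (rule lip_r[OF je jm _ r_bound r_lip MR LR])
        fix k x assume "k \<in> {1..K}"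
        thus "pL1 (pl t k x (emp K N xs)) (pl t k x m) \<le> LQ * jL1 K (emp K N xs) m"
          using pol je jm unfolding policy_class_def by blast
      qed
    qed
    finally show ?thesis .
  qed
  have "\<bar>EE D (\<lambda>xs. EE (act_law K N pl t xs) (R xs)) - B m\<bar> = \<bar>EE D (\<lambda>xs. EE (act_law K N pl t xs) (R xs) - B m)\<bar>"
    using finD by (simp add: EE_int)
  also have "\<dots> \<le> EE D (\<lambda>xs. \<bar>EE (act_law K N pl t xs) (R xs) - B m\<bar>)" by (rule EE_abs_le)
  also have "\<dots> \<le> EE D (\<lambda>xs. c1 + c2 * jL1 K (emp K N xs) m)"
    by (intro integral_mono EE_int[OF finD] pw)
  also have "\<dots> = c1 + c2 * EE D (\<lambda>xs. jL1 K (emp K N xs) m)"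
    using finD by (simp add: EE_int)
  finally show ?thesis using sa unfolding R_def B_def c1_def c2_def D_def by simp
qed

lemma rMF_bound:
  fixes r :: "nat \<Rightarrow> 'x::finite \<Rightarrow> 'u::finite \<Rightarrow> ('x \<Rightarrow> nat \<Rightarrow> real) \<Rightarrow> ('u \<Rightarrow> nat \<Rightarrow> real) \<Rightarrow> real"
  assumes r_bound: "\<forall>k\<in>{1..K}. \<forall>x u mu nu. is_jdist K mu \<longrightarrow> is_jdist K nu \<longrightarrow>
                    \<bar>r k x u mu nu\<bar> \<le> MR"
    and jm: "is_jdist K m" and k: "k \<in> {1..K}" and MR: "MR \<ge> 0"
  shows "\<bar>rMF r pit m k\<bar> \<le> MR"
proof -
  have "\<bar>rMF r pit m k\<bar> \<le> (\<Sum>x\<in>UNIV. \<Sum>u\<in>UNIV. m x k * pmf (pit k x m) u * MR)"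
    unfolding rMF_def
  proof (intro order_trans[OF sum_abs] sum_mono)
    fix x u
    have "\<bar>r k x u m (nuMF pit m)\<bar> \<le> MR" using r_bound k jm nuMF_jdist[OF jm] by blast
    thus "\<bar>m x k * pmf (pit k x m) u * r k x u m (nuMF pit m)\<bar> \<le> m x k * pmf (pit k x m) u * MR"
      using jdist_nonneg[OF jm, of x k] by (simp add: abs_mult mult_left_mono)
  qed
  also have "\<dots> = MR * (\<Sum>x\<in>UNIV. m x k)"
    by (simp add: sum_distrib_left[symmetric] sum_distrib_right[symmetric] mult.commute)
  also have "\<dots> \<le> MR * 1"
  proof (intro mult_left_mono MR)
    have "(\<Sum>x\<in>UNIV. m x k) \<le> (\<Sum>k\<in>{1..K}. \<Sum>x\<in>UNIV. m x k)"
      using k by (intro member_le_sum) (auto intro!: sum_nonneg simp: jdist_nonneg[OF jm])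
    thus "(\<Sum>x\<in>UNIV. m x k) \<le> 1" using jdist_sum1[OF jm] by simp
  qed
  finally show ?thesis by simp
qed

theorem theorem6:
  fixes K :: nat and N :: "nat \<Rightarrow> nat"
    and r :: "nat \<Rightarrow> 'x::finite \<Rightarrow> 'u::finite \<Rightarrow> ('x \<Rightarrow> nat \<Rightarrow> real) \<Rightarrow> ('u \<Rightarrow> nat \<Rightarrow> real) \<Rightarrow> real"
    and P :: "nat \<Rightarrow> 'x \<Rightarrow> 'u \<Rightarrow> ('x \<Rightarrow> nat \<Rightarrow> real) \<Rightarrow> ('u \<Rightarrow> nat \<Rightarrow> real) \<Rightarrow> 'x pmf"
    and pl :: "nat \<Rightarrow> nat \<Rightarrow> 'x \<Rightarrow> ('x \<Rightarrow> nat \<Rightarrow> real) \<Rightarrow> 'u pmf"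
    and x0 :: "nat \<times> nat \<Rightarrow> 'x"
    and MR LR LP LQ \<gamma> :: real
  assumes K: "K \<ge> 1"
    and N: "\<forall>k\<in>{1..K}. N k \<ge> 1"
    and pos_consts: "MR > 0" "LR > 0" "LP > 0" "LQ > 0"
    and gamma: "0 \<le> \<gamma>" "\<gamma> < 1"
    and r_bound: "\<forall>k\<in>{1..K}. \<forall>x u mu nu. is_jdist K mu \<longrightarrow> is_jdist K nu \<longrightarrow>
                    \<bar>r k x u mu nu\<bar> \<le> MR"
    and r_lip: "\<forall>k\<in>{1..K}. \<forall>x u mu1 nu1 mu2 nu2.
                  is_jdist K mu1 \<longrightarrow> is_jdist K nu1 \<longrightarrow> is_jdist K mu2 \<longrightarrow> is_jdist K nu2 \<longrightarrow>
                  \<bar>r k x u mu1 nu1 - r k x u mu2 nu2\<bar> \<le> LR * (jL1 K mu1 mu2 + jL1 K nu1 nu2)"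
    and P_lip: "\<forall>k\<in>{1..K}. \<forall>x u mu1 nu1 mu2 nu2.
                  is_jdist K mu1 \<longrightarrow> is_jdist K nu1 \<longrightarrow> is_jdist K mu2 \<longrightarrow> is_jdist K nu2 \<longrightarrow>
                  pL1 (P k x u mu1 nu1) (P k x u mu2 nu2) \<le> LP * (jL1 K mu1 mu2 + jL1 K nu1 nu2)"
    and SP_small: "\<gamma> * ((1 + real K * LQ) + real K * LP * (2 + real K * LQ)) < 1"
    and pol: "policy_class K LQ pl"
  shows
    "let CR = MR + LR; CP = 2 + real K * LP;
         SR = MR * (1 + LQ) + LR * (2 + real K * LQ);
         SP = (1 + real K * LQ) + real K * LP * (2 + real K * LQ);
         sq = sqrt (real (CARD('x)) * real (CARD('u)));
         sN = (\<Sum>k\<in>{1..K}. 1 / sqrt (real (N k)))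
     in \<bar>vN K N r P pl \<gamma> x0 - vMF K r P pl \<gamma> (emp K N x0)\<bar>
        \<le> CR / (1 - \<gamma>) * sq * sN
           + CP * (SR / (SP - 1)) * sq * sN * (1 / (1 - \<gamma> * SP) - 1 / (1 - \<gamma>))"
proof -
  define sN where "sN = (\<Sum>k\<in>{1..K}. 1 / sqrt (real (N k)))"
  define sq where "sq = sqrt (real (CARD('x)) * real (CARD('u)))"
  define CR where "CR = MR + LR"
  define CP where "CP = 2 + real K * LP"
  define SR where "SR = MR * (1 + LQ) + LR * (2 + real K * LQ)"
  define SP where "SP = (1 + real K * LQ) + real K * LP * (2 + real K * LQ)"
  define Np where "Np = real (Npop K N)"
  define mu where "mu = (\<lambda>t. mf_traj P pl (emp K N x0) t)"
  define a where "a = (\<lambda>t. EE (sa_law K N P pl x0 t) (\<lambda>(xs, us). 1 / real (Npop K N) * (\<Sum>i\<in>agents K N. r (fst i) (xs i) (us i) (emp K N xs) (emp K N us))))"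
  define b where "b = (\<lambda>t. \<Sum>k\<in>{1..K}. rMF r (pl t) (mu t) k)"
  define e where "e = (\<lambda>t. EE (state_law K N P pl x0 t) (\<lambda>xs. jL1 K (emp K N xs) (mu t)))"
  define c1 where "c1 = LR * (sqrt (real CARD('u)) * sN)"
  define c2 where "c2 = MR * (1 + LQ) + LR * (2 + LQ)"
  define C where "C = CP * sq * sN"
  have Kr: "real K \<ge> 1" using K by simp
  have NpP: "Npop K N > 0" by (rule Npop_pos[OF K N])
  have MR0: "MR \<ge> 0" and LR0: "LR \<ge> 0" and LP0: "LP \<ge> 0" and LQ0: "LQ \<ge> 0" using pos_consts by auto
  have sN0: "sN \<ge> 0" unfolding sN_def by (intro sum_nonneg) auto
  have cx: "real CARD('x) \<ge> 1" and cu: "real CARD('u) \<ge> 1" by (simp_all add: Suc_le_eq)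
  have sqx: "sqrt (real CARD('x)) \<le> sq" unfolding sq_def using cx cu
    by (intro real_sqrt_le_mono) (simp add: mult_le_cancel_left1)
  have squ: "sqrt (real CARD('u)) \<le> sq" unfolding sq_def using cx cu
    by (intro real_sqrt_le_mono) (simp add: mult_le_cancel_right1)
  have sq0: "sq \<ge> 0" unfolding sq_def by simp
  have jmu: "is_jdist K (mu t)" for t unfolding mu_def by (rule mf_traj_jdist[OF emp_jdist[OF NpP]])
  have SPge: "1 + LQ + LP * (2 + LQ) \<le> SP"
  proof -
    have "LQ \<le> real K * LQ" using Kr LQ0 by (simp add: mult_le_cancel_right1)
    moreover have "LP * (2 + LQ) \<le> real K * LP * (2 + real K * LQ)"
    proof -
      have "LP \<le> real K * LP" using Kr LP0 by (simp add: mult_le_cancel_right1)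
      moreover have "2 + LQ \<le> 2 + real K * LQ" using \<open>LQ \<le> real K * LQ\<close> by simp
      ultimately show ?thesis using LP0 LQ0 by (intro mult_mono) auto
    qed
    ultimately show ?thesis unfolding SP_def by linarith
  qed
  have SP1: "SP > 1"
  proof -
    have kl: "real K * LQ \<ge> 0" using Kr LQ0 by simp
    have k2: "2 + real K * LQ > 0" using kl by linarith
    have k3: "real K * LP > 0" using Kr pos_consts by simp
    have "real K * LP * (2 + real K * LQ) > 0" by (rule mult_pos_pos[OF k3 k2])
    moreover have "real K * LQ \<ge> 0" using Kr LQ0 by simp
    ultimately show ?thesis unfolding SP_def by linarith
  qed
  have gSP: "\<gamma> * SP < 1" using SP_small unfolding SP_def by simp
  have Cge: "(2 * sqrt (real CARD('x)) + LP * sqrt (real CARD('u))) * sN \<le> C"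
  proof -
    have "2 * sqrt (real CARD('x)) + LP * sqrt (real CARD('u)) \<le> 2 * sq + real K * LP * sq"
    proof (intro add_mono)
      show "2 * sqrt (real CARD('x)) \<le> 2 * sq" using sqx by simp
      have "LP * sqrt (real CARD('u)) \<le> LP * sq" using squ LP0 by (intro mult_left_mono) auto
      also have "\<dots> \<le> real K * LP * sq" using Kr LP0 sq0 by (intro mult_right_mono) (auto simp: mult_le_cancel_right1)
      finally show "LP * sqrt (real CARD('u)) \<le> real K * LP * sq" .
    qed
    also have "\<dots> = CP * sq" unfolding CP_def by (simp add: algebra_simps)
    finally show ?thesis unfolding C_def using sN0 by (intro mult_right_mono) auto
  qed
  have C0: "C \<ge> 0" unfolding C_def CP_def using Kr LP0 sq0 sN0 by auto
  have c10: "c1 \<ge> 0" unfolding c1_def using LR0 sN0 by auto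
  have c20: "c2 \<ge> 0" unfolding c2_def using MR0 LR0 LQ0 by auto
  have c1le: "c1 \<le> CR * sq * sN"
  proof -
    have "c1 = LR * sqrt (real CARD('u)) * sN" unfolding c1_def by simp
    also have "\<dots> \<le> CR * sq * sN" unfolding CR_def using squ MR0 LR0 sN0 sq0
      by (intro mult_right_mono mult_mono) auto
    finally show ?thesis .
  qed
  have c2le: "c2 \<le> SR"
    unfolding c2_def SR_def using Kr LQ0 LR0 by (simp add: mult_left_mono mult_le_cancel_right1)
  have ebound: "e t \<le> C * (SP ^ t - 1) / (SP - 1)" for t
    unfolding e_def mu_def
    by (rule e_bound[OF N NpP P_lip LP0 pol _ SPge SP1]) (use Cge in \<open>simp add: sN_def\<close>)
  have e0: "e t \<ge> 0" for t unfolding e_def by (intro integral_nonneg_AE) (auto simp: jL1_nonneg)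
  have abt: "\<bar>a t - b t\<bar> \<le> c1 + c2 * (C * (SP ^ t - 1) / (SP - 1))" for t
  proof -
    have "\<bar>a t - b t\<bar> \<le> c1 + c2 * e t"
      unfolding a_def b_def c1_def c2_def e_def sN_def
      by (rule ab_bound[OF N NpP r_bound r_lip MR0 LR0 pol jmu])
    also have "\<dots> \<le> c1 + c2 * (C * (SP ^ t - 1) / (SP - 1))"
      using ebound[of t] c20 by (intro add_left_mono mult_left_mono) auto
    finally show ?thesis .
  qed
  have MRbound: "\<bar>EE (sa_law K N P pl x0 t) (\<lambda>(xs, us). r (fst i) (xs i) (us i) (emp K N xs) (emp K N us))\<bar> \<le> MR"
    if i: "i \<in> agents K N" for i t
  proof -
    have fi: "fst i \<in> {1..K}" using i by (auto simp: agents_def)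
    have "\<bar>EE (sa_law K N P pl x0 t) (\<lambda>(xs, us). r (fst i) (xs i) (us i) (emp K N xs) (emp K N us))\<bar>
        \<le> EE (sa_law K N P pl x0 t) (\<lambda>z. \<bar>(\<lambda>(xs, us). r (fst i) (xs i) (us i) (emp K N xs) (emp K N us)) z\<bar>)"
      by (rule EE_abs_le)
    also have "\<dots> \<le> EE (sa_law K N P pl x0 t) (\<lambda>z. MR)"
    proof (intro integral_mono)
      fix z :: "(nat \<times> nat \<Rightarrow> 'x) \<times> (nat \<times> nat \<Rightarrow> 'u)"
      obtain xs us where z: "z = (xs, us)" by (cases z)
      show "\<bar>(\<lambda>(xs, us). r (fst i) (xs i) (us i) (emp K N xs) (emp K N us)) z\<bar> \<le> MR"
        using r_bound fi emp_jdist[OF NpP, of xs] emp_jdist[OF NpP, of us] unfolding z by auto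
    qed (auto intro!: EE_int simp: sa_law_def fin_state fin_act)
    also have "\<dots> = MR" by simp
    finally show ?thesis .
  qed
  have summ_i: "summable (\<lambda>t. \<gamma> ^ t * EE (sa_law K N P pl x0 t) (\<lambda>(xs, us). r (fst i) (xs i) (us i) (emp K N xs) (emp K N us)))"
    if i: "i \<in> agents K N" for i
  proof (rule summable_comparison_test'[where g="\<lambda>t. MR * \<gamma> ^ t" and N=0])
    show "summable (\<lambda>t. MR * \<gamma> ^ t)" using gamma by (intro summable_mult summable_geometric) auto
    fix t
    show "norm (\<gamma> ^ t * EE (sa_law K N P pl x0 t) (\<lambda>(xs, us). r (fst i) (xs i) (us i) (emp K N xs) (emp K N us))) \<le> MR * \<gamma> ^ t"
    proof -
      have g0: "0 \<le> \<gamma> ^ t" using gamma by simp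
      show ?thesis using mult_left_mono[OF MRbound[OF i, of t] g0] g0 by (simp add: abs_mult mult.commute)
    qed
  qed
  have vN_eq: "vN K N r P pl \<gamma> x0 = (\<Sum>t. \<gamma> ^ t * a t)"
  proof -
    have "vN K N r P pl \<gamma> x0 = 1 / Np * (\<Sum>t. \<Sum>i\<in>agents K N. \<gamma> ^ t * EE (sa_law K N P pl x0 t) (\<lambda>(xs, us). r (fst i) (xs i) (us i) (emp K N xs) (emp K N us)))"
      unfolding vN_def Np_def by (subst suminf_sum) (auto intro: summ_i)
    also have "\<dots> = (\<Sum>t. 1 / Np * (\<Sum>i\<in>agents K N. \<gamma> ^ t * EE (sa_law K N P pl x0 t) (\<lambda>(xs, us). r (fst i) (xs i) (us i) (emp K N xs) (emp K N us))))"
      by (rule suminf_mult[symmetric]) (auto intro!: summable_sum summ_i)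
    also have "\<dots> = (\<Sum>t. \<gamma> ^ t * a t)"
    proof (rule arg_cong[where f=suminf], rule ext)
      fix t
      have fin: "finite (set_pmf (sa_law K N P pl x0 t))" by (simp add: sa_law_def fin_state fin_act)
      have eqf: "(\<lambda>(xs, us). 1 / real (Npop K N) * (\<Sum>i\<in>agents K N. r (fst i) (xs i) (us i) (emp K N xs) (emp K N us)))
          = (\<lambda>z. 1 / Np * (\<Sum>i\<in>agents K N. (\<lambda>(xs, us). r (fst i) (xs i) (us i) (emp K N xs) (emp K N us)) z))"
        by (rule ext) (simp add: split_beta Np_def)
      show "1 / Np * (\<Sum>i\<in>agents K N. \<gamma> ^ t * EE (sa_law K N P pl x0 t) (\<lambda>(xs, us). r (fst i) (xs i) (us i) (emp K N xs) (emp K N us))) = \<gamma> ^ t * a t"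
        unfolding a_def eqf using fin by (simp add: EE_int sum_distrib_left[symmetric])
    qed
    finally show ?thesis .
  qed
  have summ_k: "summable (\<lambda>t. \<gamma> ^ t * rMF r (pl t) (mu t) k)" if k: "k \<in> {1..K}" for k
  proof (rule summable_comparison_test'[where g="\<lambda>t. MR * \<gamma> ^ t" and N=0])
    show "summable (\<lambda>t. MR * \<gamma> ^ t)" using gamma by (intro summable_mult summable_geometric) auto
    fix t
    show "norm (\<gamma> ^ t * rMF r (pl t) (mu t) k) \<le> MR * \<gamma> ^ t"
    proof -
      have g0: "0 \<le> \<gamma> ^ t" using gamma by simp
      show ?thesis using mult_left_mono[OF rMF_bound[OF r_bound jmu k MR0, of "pl t" t] g0] g0 by (simp add: abs_mult mult.commute)
    qed
  qed
  have vMF_eq: "vMF K r P pl \<gamma> (emp K N x0) = (\<Sum>t. \<gamma> ^ t * b t)"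
  proof -
    have "vMF K r P pl \<gamma> (emp K N x0) = (\<Sum>t. \<Sum>k\<in>{1..K}. \<gamma> ^ t * rMF r (pl t) (mu t) k)"
      unfolding vMF_def mu_def by (subst suminf_sum) (auto intro: summ_k[unfolded mu_def])
    also have "\<dots> = (\<Sum>t. \<gamma> ^ t * b t)" unfolding b_def by (simp add: sum_distrib_left)
    finally show ?thesis .
  qed
  have summ_a: "summable (\<lambda>t. \<gamma> ^ t * a t)"
  proof -
    have S1: "summable (\<lambda>t. 1 / Np * (\<Sum>i\<in>agents K N. \<gamma> ^ t * EE (sa_law K N P pl x0 t) (\<lambda>(xs, us). r (fst i) (xs i) (us i) (emp K N xs) (emp K N us))))"
      by (auto intro!: summable_mult summable_sum summ_i)
    have eqt: "1 / Np * (\<Sum>i\<in>agents K N. \<gamma> ^ t * EE (sa_law K N P pl x0 t) (\<lambda>(xs, us). r (fst i) (xs i) (us i) (emp K N xs) (emp K N us))) = \<gamma> ^ t * a t" for t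
    proof -
      have fin: "finite (set_pmf (sa_law K N P pl x0 t))" by (simp add: sa_law_def fin_state fin_act)
      have eqf: "(\<lambda>(xs, us). 1 / real (Npop K N) * (\<Sum>i\<in>agents K N. r (fst i) (xs i) (us i) (emp K N xs) (emp K N us)))
          = (\<lambda>z. 1 / Np * (\<Sum>i\<in>agents K N. (\<lambda>(xs, us). r (fst i) (xs i) (us i) (emp K N xs) (emp K N us)) z))"
        by (rule ext) (simp add: split_beta Np_def)
      show ?thesis unfolding a_def eqf using fin by (simp add: EE_int sum_distrib_left[symmetric])
    qed
    have "(\<lambda>t. \<gamma> ^ t * a t) = (\<lambda>t. 1 / Np * (\<Sum>i\<in>agents K N. \<gamma> ^ t * EE (sa_law K N P pl x0 t) (\<lambda>(xs, us). r (fst i) (xs i) (us i) (emp K N xs) (emp K N us))))"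
      by (rule ext) (rule eqt[symmetric])
    with S1 show ?thesis by simp
  qed
  have summ_b: "summable (\<lambda>t. \<gamma> ^ t * b t)"
  proof -
    have S2: "summable (\<lambda>t. \<Sum>k\<in>{1..K}. \<gamma> ^ t * rMF r (pl t) (mu t) k)"
      by (rule summable_sum) (rule summ_k)
    have "(\<lambda>t. \<gamma> ^ t * b t) = (\<lambda>t. \<Sum>k\<in>{1..K}. \<gamma> ^ t * rMF r (pl t) (mu t) k)"
      by (rule ext) (simp only: b_def sum_distrib_left)
    with S2 show ?thesis by simp
  qed
  define K2 where "K2 = c2 * C / (SP - 1)"
  define G where "G = (\<lambda>t. c1 * \<gamma> ^ t + K2 * ((\<gamma> * SP) ^ t - \<gamma> ^ t))"
  have g1: "\<bar>\<gamma>\<bar> < 1" and g2: "\<bar>\<gamma> * SP\<bar> < 1" using gamma gSP SP1 by auto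
  have Gsums: "G sums (c1 * (1 / (1 - \<gamma>)) + K2 * (1 / (1 - \<gamma> * SP) - 1 / (1 - \<gamma>)))"
    unfolding G_def
    by (intro sums_add sums_mult sums_diff geometric_sums) (use g1 g2 in auto)
  have Gle: "\<bar>\<gamma> ^ t * (a t - b t)\<bar> \<le> G t" for t
  proof -
    have "\<bar>\<gamma> ^ t * (a t - b t)\<bar> = \<gamma> ^ t * \<bar>a t - b t\<bar>" using gamma by (simp add: abs_mult)
    also have "\<dots> \<le> \<gamma> ^ t * (c1 + c2 * (C * (SP ^ t - 1) / (SP - 1)))"
      using abt[of t] gamma by (intro mult_left_mono) auto
    also have "\<dots> = G t" unfolding G_def K2_def using SP1 by (simp add: field_simps power_mult_distrib)
    finally show ?thesis .
  qed
  have "\<bar>vN K N r P pl \<gamma> x0 - vMF K r P pl \<gamma> (emp K N x0)\<bar> = \<bar>\<Sum>t. \<gamma> ^ t * (a t - b t)\<bar>"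
    unfolding vN_eq vMF_eq using suminf_diff[OF summ_a summ_b] by (simp add: right_diff_distrib)
  also have "\<dots> \<le> (\<Sum>t. \<bar>\<gamma> ^ t * (a t - b t)\<bar>)"
    by (rule summable_rabs) (rule summable_comparison_test'[OF sums_summable[OF Gsums]], use Gle in auto)
  also have "\<dots> \<le> suminf G"
    by (rule suminf_le[OF Gle]) (rule summable_comparison_test'[OF sums_summable[OF Gsums]], use Gle in auto, rule sums_summable[OF Gsums])
  also have "\<dots> = c1 * (1 / (1 - \<gamma>)) + K2 * (1 / (1 - \<gamma> * SP) - 1 / (1 - \<gamma>))"
    by (rule sums_unique[OF Gsums, symmetric])
  also have "\<dots> \<le> CR / (1 - \<gamma>) * sq * sN + CP * (SR / (SP - 1)) * sq * sN * (1 / (1 - \<gamma> * SP) - 1 / (1 - \<gamma>))"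
  proof (rule add_mono)
    show "c1 * (1 / (1 - \<gamma>)) \<le> CR / (1 - \<gamma>) * sq * sN"
      using c1le gamma by (simp add: divide_right_mono)
    have D0: "1 / (1 - \<gamma> * SP) - 1 / (1 - \<gamma>) \<ge> 0"
    proof -
      have "\<gamma> \<le> \<gamma> * SP" using gamma SP1 by (simp add: mult_le_cancel_left1)
      hence "1 - \<gamma> * SP \<le> 1 - \<gamma>" by simp
      thus ?thesis using gSP gamma by (simp add: frac_le)
    qed
    have "K2 \<le> SR * C / (SP - 1)"
      unfolding K2_def using c2le SP1 C0 by (intro divide_right_mono mult_right_mono) auto
    also have "\<dots> = CP * (SR / (SP - 1)) * sq * sN" unfolding C_def by simp
    finally have "K2 \<le> CP * (SR / (SP - 1)) * sq * sN" .
    thus "K2 * (1 / (1 - \<gamma> * SP) - 1 / (1 - \<gamma>)) \<le> CP * (SR / (SP - 1)) * sq * sN * (1 / (1 - \<gamma> * SP) - 1 / (1 - \<gamma>))"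
      using D0 by (rule mult_right_mono)
  qed
  finally show ?thesis
    unfolding Let_def CR_def CP_def SR_def SP_def sq_def sN_def .
qed


end
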